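(* Let $G=G_n$ be a graph on vertex set $[n]$, let $\delta=\delta(G)$ and $\bar d=\bar d(G)$, and suppose $\bar d\to\infty$ as $n\to\infty$. Suppose there exist constants $\epsilon,\zeta,\eta>0$ such that for all sufficiently large $n$: (a) $\delta\le(\epsilon/4)\bar d$; no two $\epsilon$-light vertices are adjacent; and every vertex of $G$ has at most one $\epsilon$-light neighbour; (b) no set of $s<\zeta n$ vertices induces more than $(\epsilon/4)\bar d s$ edges; (c) for all disjoint $S,S'\subseteq[n]$ with $|S|\ge|S'|\ge\zeta n$, $|E(S,S')|\ge\eta\bar d n$. Then for all sufficiently large $n$, $T(G)=\delta$.
   Context: For a graph $G$ with $|V(G)|\ge2$: $m(G)$ is the number of edges, $\delta(G)$ the minimum degree, $\bar d(G)=2m(G)/(|V(G)|-1)$, and $T(G)$ the maximum number of pairwise edge-disjoint spanning trees of $G$. A vertex is $\epsilon$-light if its degree is at most $\delta(G)+\epsilon\bar d(G)$. $E(S,S')$ is the set of edges with one end in $S$ and the other in $S'$. *)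

theory Defs
  imports Complex_Main
begin

definition simple_graph :: "'a set \<Rightarrow> 'a set set \<Rightarrow> bool" where
  "simple_graph V E \<longleftrightarrow> finite V \<and> (\<forall>e\<in>E. \<exists>u v. u \<in> V \<and> v \<in> V \<and> u \<noteq> v \<and> e = {u, v})"

definition degree :: "'a set set \<Rightarrow> 'a \<Rightarrow> nat" where
  "degree E v = card {u. {u, v} \<in> E}"

definition min_degree :: "'a set \<Rightarrow> 'a set set \<Rightarrow> nat" where
  "min_degree V E = Min ((\<lambda>v. degree E v) ` V)"

definition avg_deg :: "'a set \<Rightarrow> 'a set set \<Rightarrow> real" where
  "avg_deg V E = 2 * real (card E) / (real (card V) - 1)"

definition light :: "'a set \<Rightarrow> 'a set set \<Rightarrow> real \<Rightarrow> 'a \<Rightarrow> bool" where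
  "light V E \<epsilon> v \<longleftrightarrow> v \<in> V \<and> real (degree E v) \<le> real (min_degree V E) + \<epsilon> * avg_deg V E"

definition cross_edges :: "'a set set \<Rightarrow> 'a set \<Rightarrow> 'a set \<Rightarrow> 'a set set" where
  "cross_edges E S S' = {e \<in> E. \<exists>u\<in>S. \<exists>v\<in>S'. e = {u, v}}"

definition induced_edges :: "'a set set \<Rightarrow> 'a set \<Rightarrow> 'a set set" where
  "induced_edges E S = {e \<in> E. e \<subseteq> S}"

definition connected_on :: "'a set \<Rightarrow> 'a set set \<Rightarrow> bool" where
  "connected_on V F \<longleftrightarrow> (\<forall>u\<in>V. \<forall>v\<in>V. (u, v) \<in> {(x, y). {x, y} \<in> F}\<^sup>*)"

definition is_cycle :: "'a set set \<Rightarrow> 'a list \<Rightarrow> bool" where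
  "is_cycle F vs \<longleftrightarrow> length vs \<ge> 3 \<and> distinct vs \<and>
     (\<forall>i. Suc i < length vs \<longrightarrow> {vs ! i, vs ! Suc i} \<in> F) \<and> {last vs, hd vs} \<in> F"

definition acyclic_edges :: "'a set set \<Rightarrow> bool" where
  "acyclic_edges F \<longleftrightarrow> \<not> (\<exists>vs. is_cycle F vs)"

definition spanning_tree :: "'a set \<Rightarrow> 'a set set \<Rightarrow> 'a set set \<Rightarrow> bool" where
  "spanning_tree V E F \<longleftrightarrow> F \<subseteq> E \<and> connected_on V F \<and> acyclic_edges F"

definition tree_packing :: "'a set \<Rightarrow> 'a set set \<Rightarrow> nat" where
  "tree_packing V E = Max {k. \<exists>Ts :: nat \<Rightarrow> 'a set set.
      (\<forall>i<k. spanning_tree V E (Ts i)) \<and> (\<forall>i<k. \<forall>j<k. i \<noteq> j \<longrightarrow> Ts i \<inter> Ts j = {})}"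

end

theory Submission
  imports Defs
begin

definition reach :: "'a set set \<Rightarrow> ('a \<times> 'a) set" where
  "reach F = {(x, y). {x, y} \<in> F}\<^sup>*"

lemma reach_refl[simp]: "(x, x) \<in> reach F"
  unfolding reach_def by simp

lemma reach_edge: "{x, y} \<in> F \<Longrightarrow> (x, y) \<in> reach F"
  unfolding reach_def by auto

lemma reach_trans: "(x, y) \<in> reach F \<Longrightarrow> (y, z) \<in> reach F \<Longrightarrow> (x, z) \<in> reach F"
  unfolding reach_def by (rule rtrancl_trans)

lemma reach_sym: assumes "(x, y) \<in> reach F" shows "(y, x) \<in> reach F"
proof -
  have "sym {(x, y). {x, y} \<in> F}" by (auto simp: sym_def insert_commute)
  then have "sym ({(x, y). {x, y} \<in> F}\<^sup>*)" by (rule sym_rtrancl)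
  then show ?thesis using assms unfolding reach_def sym_def by blast
qed

lemma reach_mono: "F \<subseteq> F' \<Longrightarrow> reach F \<subseteq> reach F'"
  unfolding reach_def by (rule rtrancl_mono) auto

lemma reach_mono': "(x, y) \<in> reach F \<Longrightarrow> F \<subseteq> F' \<Longrightarrow> (x, y) \<in> reach F'"
  using reach_mono by blast

lemma reach_insert:
  assumes "(x, y) \<in> reach (insert {u, v} H)"
  shows "(x, y) \<in> reach H \<or> ((x, u) \<in> reach H \<and> (v, y) \<in> reach H) \<or>
         ((x, v) \<in> reach H \<and> (u, y) \<in> reach H)"
proof -
  have "(x, y) \<in> {(x, y). {x, y} \<in> insert {u, v} H}\<^sup>*" using assms unfolding reach_def .
  then show ?thesis
  proof (induction rule: rtrancl_induct)
    case base
    then show ?case by simp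
  next
    case (step y z)
    have e: "{y, z} \<in> H \<or> {y, z} = {u, v}" using step(2) by auto
    show ?case
    proof (cases "{y, z} \<in> H")
      case True
      have yz: "(y, z) \<in> reach H" using True by (rule reach_edge)
      have t1: "(a, y) \<in> reach H \<Longrightarrow> (a, z) \<in> reach H" for a
        by (rule reach_trans[OF _ yz])
      show ?thesis using step(3) t1 by blast
    next
      case False
      then have "{y, z} = {u, v}" using e by blast
      then have yz: "(y = u \<and> z = v) \<or> (y = v \<and> z = u)" by (simp add: doubleton_eq_iff)
      show ?thesis
      proof (cases "y = u \<and> z = v")
        case True
        then have "(x, u) \<in> reach H \<or> (x, v) \<in> reach H" using step(3) by auto
        then show ?thesis using True by auto
      next
        case False
        then have "y = v" "z = u" using yz by blast+
        then have "(x, u) \<in> reach H \<or> (x, v) \<in> reach H" using step(3) by auto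
        then show ?thesis using \<open>z = u\<close> by auto
      qed
    qed
  qed
qed

lemma reach_insert_iff:
  "(x, y) \<in> reach (insert {u, v} H) \<longleftrightarrow> (x, y) \<in> reach H \<or> ((x, u) \<in> reach H \<and> (v, y) \<in> reach H) \<or>
         ((x, v) \<in> reach H \<and> (u, y) \<in> reach H)"
proof
  assume "(x, y) \<in> reach (insert {u, v} H)" then show "(x, y) \<in> reach H \<or> ((x, u) \<in> reach H \<and> (v, y) \<in> reach H) \<or>
         ((x, v) \<in> reach H \<and> (u, y) \<in> reach H)" by (rule reach_insert)
next
  have sub: "reach H \<subseteq> reach (insert {u, v} H)" by (rule reach_mono) auto
  have uv: "(u, v) \<in> reach (insert {u, v} H)" by (rule reach_edge) auto
  have vu: "(v, u) \<in> reach (insert {u, v} H)" using uv by (rule reach_sym)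
  show "(x, y) \<in> reach H \<or> ((x, u) \<in> reach H \<and> (v, y) \<in> reach H) \<or>
         ((x, v) \<in> reach H \<and> (u, y) \<in> reach H) \<Longrightarrow> (x, y) \<in> reach (insert {u, v} H)"
  proof -
    assume h: "(x, y) \<in> reach H \<or> ((x, u) \<in> reach H \<and> (v, y) \<in> reach H) \<or>
         ((x, v) \<in> reach H \<and> (u, y) \<in> reach H)"
    show ?thesis
    proof (cases "(x, y) \<in> reach H")
      case True then show ?thesis using sub by blast
    next
      case False
      show ?thesis
      proof (cases "(x, u) \<in> reach H \<and> (v, y) \<in> reach H")
        case True
        then have "(x, u) \<in> reach (insert {u, v} H)" "(v, y) \<in> reach (insert {u, v} H)" using sub by blast+
        then show ?thesis using uv by (meson reach_trans)
      next
        case F2: False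
        then have "(x, v) \<in> reach (insert {u, v} H)" "(u, y) \<in> reach (insert {u, v} H)" using sub h False by blast+
        then show ?thesis using vu by (meson reach_trans)
      qed
    qed
  qed
qed

definition forest :: "'a set set \<Rightarrow> bool" where
  "forest F \<longleftrightarrow> (\<forall>g\<in>F. \<forall>u v. g = {u, v} \<longrightarrow> (u, v) \<notin> reach (F - {g}))"

lemma forest_subset:
  assumes F: "forest F" and sub: "F' \<subseteq> F" shows "forest F'"
  unfolding forest_def
proof (intro ballI allI impI)
  fix g u v assume g: "g \<in> F'" and guv: "g = {u, v}"
  have "reach (F' - {g}) \<subseteq> reach (F - {g})" by (rule reach_mono) (use sub in auto)
  moreover have "(u, v) \<notin> reach (F - {g})" using F g sub guv unfolding forest_def by blast
  ultimately show "(u, v) \<notin> reach (F' - {g})" by blast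
qed

lemma forest_insert:
  assumes "forest F" "(u, v) \<notin> reach F"
  shows "forest (insert {u, v} F)"
  unfolding forest_def
proof (intro ballI allI impI)
  fix g c d assume g: "g \<in> insert {u, v} F" and gcd: "g = {c, d}"
  have nin: "{u, v} \<notin> F" using assms(2) reach_edge[of u v F] by auto
  show "(c, d) \<notin> reach (insert {u, v} F - {g})"
  proof (cases "g = {u, v}")
    case True
    then have eq: "insert {u, v} F - {g} = F" using nin by auto
    have "(c = u \<and> d = v) \<or> (c = v \<and> d = u)" using True gcd by (auto simp: doubleton_eq_iff)
    then show ?thesis
    proof
      assume "c = u \<and> d = v" then show ?thesis using eq assms(2) by simp
    next
      assume cd: "c = v \<and> d = u"
      show ?thesis
      proof
        assume "(c, d) \<in> reach (insert {u, v} F - {g})"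
        then have "(v, u) \<in> reach F" using eq cd by simp
        then have "(u, v) \<in> reach F" by (rule reach_sym)
        then show False using assms(2) by simp
      qed
    qed
  next
    case False
    then have gF: "g \<in> F" using g by auto
    have eq: "insert {u, v} F - {g} = insert {u, v} (F - {g})" using False by auto
    show ?thesis
    proof
      assume "(c, d) \<in> reach (insert {u, v} F - {g})"
      then have "(c, d) \<in> reach (insert {u, v} (F - {g}))" using eq by simp
      then have disj: "(c, d) \<in> reach (F - {g}) \<or> ((c, u) \<in> reach (F - {g}) \<and> (v, d) \<in> reach (F - {g})) \<or>
         ((c, v) \<in> reach (F - {g}) \<and> (u, d) \<in> reach (F - {g}))" by (rule reach_insert)
      have ncd: "(c, d) \<notin> reach (F - {g})" using assms(1) gF gcd unfolding forest_def by simp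
      have sub: "reach (F - {g}) \<subseteq> reach F" by (rule reach_mono) auto
      have cdF: "(c, d) \<in> reach F" using gF gcd reach_edge[of c d F] by simp
      have dcF: "(d, c) \<in> reach F" using cdF by (rule reach_sym)
      have c2: "((c, u) \<in> reach F \<and> (v, d) \<in> reach F) \<or> ((c, v) \<in> reach F \<and> (u, d) \<in> reach F)"
        using disj ncd subsetD[OF sub] by fast
      show False
      proof (cases "(c, u) \<in> reach F \<and> (v, d) \<in> reach F")
        case True
        then have uc: "(u, c) \<in> reach F" and vd: "(v, d) \<in> reach F" using reach_sym[of c u F] by auto
        have dv: "(d, v) \<in> reach F" using vd by (rule reach_sym)
        have "(u, d) \<in> reach F" by (rule reach_trans[OF uc cdF])
        then have "(u, v) \<in> reach F" by (rule reach_trans[OF _ dv])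
        then show False using assms(2) by blast
      next
        case False
        then have cv: "(c, v) \<in> reach F" and ud: "(u, d) \<in> reach F" using c2 by auto
        have "(u, c) \<in> reach F" by (rule reach_trans[OF ud dcF])
        then have "(u, v) \<in> reach F" by (rule reach_trans[OF _ cv])
        then show False using assms(2) by blast
      qed
    qed
  qed
qed

lemma forest_exchange:
  assumes T: "forest T" and uvT: "(u, v) \<in> reach T" and f: "f \<in> T" and ab: "f = {a, b}"
    and nuv: "(u, v) \<notin> reach (T - {f})"
  shows "forest (insert {u, v} (T - {f}))" and "reach (insert {u, v} (T - {f})) = reach T"
proof -
  have F1: "forest (T - {f})" using T by (rule forest_subset) auto
  show "forest (insert {u, v} (T - {f}))" using forest_insert[OF F1 nuv] .
  have Tins: "T = insert {a, b} (T - {f})" using f ab by auto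
  have "(u, v) \<in> reach (insert {a, b} (T - {f}))" using uvT Tins by simp
  then have disj: "(u, v) \<in> reach (T - {f}) \<or> ((u, a) \<in> reach (T - {f}) \<and> (b, v) \<in> reach (T - {f})) \<or>
         ((u, b) \<in> reach (T - {f}) \<and> (a, v) \<in> reach (T - {f}))"
    by (rule reach_insert)
  let ?T' = "insert {u, v} (T - {f})"
  have sub: "reach (T - {f}) \<subseteq> reach ?T'" by (rule reach_mono) auto
  have uv': "(u, v) \<in> reach ?T'" by (rule reach_edge) auto
  have vu': "(v, u) \<in> reach ?T'" using uv' by (rule reach_sym)
  have ab': "(a, b) \<in> reach ?T'"
  proof (cases "(u, a) \<in> reach (T - {f}) \<and> (b, v) \<in> reach (T - {f})")
    case True
    then have ua: "(u, a) \<in> reach ?T'" and bv: "(b, v) \<in> reach ?T'" using subsetD[OF sub] by auto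
    have au: "(a, u) \<in> reach ?T'" using ua by (rule reach_sym)
    have vb: "(v, b) \<in> reach ?T'" using bv by (rule reach_sym)
    have "(a, v) \<in> reach ?T'" by (rule reach_trans[OF au uv'])
    then show ?thesis by (rule reach_trans[OF _ vb])
  next
    case False
    then have "(u, b) \<in> reach (T - {f})" "(a, v) \<in> reach (T - {f})" using disj nuv by auto
    then have ub: "(u, b) \<in> reach ?T'" and av: "(a, v) \<in> reach ?T'" using subsetD[OF sub] by auto
    have bu: "(b, u) \<in> reach ?T'" using ub by (rule reach_sym)
    have "(a, u) \<in> reach ?T'" by (rule reach_trans[OF av vu'])
    then show ?thesis using reach_sym[OF bu] by (rule reach_trans)
  qed
  have ba': "(b, a) \<in> reach ?T'" using ab' by (rule reach_sym)
  have s: "reach (T - {f}) \<subseteq> reach T" by (rule reach_mono) auto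
  have vu: "(v, u) \<in> reach T" using uvT by (rule reach_sym)
  show "reach ?T' = reach T"
  proof
    show "reach ?T' \<subseteq> reach T"
    proof
      fix p assume "p \<in> reach ?T'"
      then obtain x y where p: "p = (x, y)" "(x, y) \<in> reach ?T'" by (cases p) auto
      from reach_insert[OF p(2)]
      have "(x, y) \<in> reach T \<or> ((x, u) \<in> reach T \<and> (v, y) \<in> reach T) \<or>
         ((x, v) \<in> reach T \<and> (u, y) \<in> reach T)" using subsetD[OF s] by fast
      then show "p \<in> reach T" using p(1) reach_trans[of x u T v] reach_trans[of x v T u] reach_trans[OF _ uvT] reach_trans[OF _ vu]
        by (metis reach_trans)
    qed
  next
    show "reach T \<subseteq> reach ?T'"
    proof
      fix p assume "p \<in> reach T"
      then obtain x y where p: "p = (x, y)" "(x, y) \<in> reach (insert {a, b} (T - {f}))"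
        using Tins by (cases p) auto
      from reach_insert[OF p(2)]
      have "(x, y) \<in> reach ?T' \<or> ((x, a) \<in> reach ?T' \<and> (b, y) \<in> reach ?T') \<or>
         ((x, b) \<in> reach ?T' \<and> (a, y) \<in> reach ?T')" using subsetD[OF sub] by fast
      then show "p \<in> reach ?T'" using p(1) ab' ba' by (metis reach_trans)
    qed
  qed
qed

definition comps :: "'a set \<Rightarrow> 'a set set \<Rightarrow> nat" where
  "comps V F = card ((\<lambda>x. reach F `` {x}) ` V)"

lemma cls_eq:
  assumes "x \<in> reach F `` {a}" shows "reach F `` {x} = reach F `` {a}"
proof -
  have ax: "(a, x) \<in> reach F" using assms by simp
  have xa: "(x, a) \<in> reach F" using ax by (rule reach_sym)
  show ?thesis
  proof (intro set_eqI iffI)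
    fix y assume "y \<in> reach F `` {x}"
    then have "(x, y) \<in> reach F" by simp
    then have "(a, y) \<in> reach F" by (rule reach_trans[OF ax])
    then show "y \<in> reach F `` {a}" by simp
  next
    fix y assume "y \<in> reach F `` {a}"
    then have "(a, y) \<in> reach F" by simp
    then have "(x, y) \<in> reach F" by (rule reach_trans[OF xa])
    then show "y \<in> reach F `` {x}" by simp
  qed
qed

lemma merge_cls:
  assumes nab: "(a, b) \<notin> reach H"
  shows "reach (insert {a, b} H) `` {x} =
    (if x \<in> reach H `` {a} \<union> reach H `` {b} then reach H `` {a} \<union> reach H `` {b} else reach H `` {x})"
proof (cases "x \<in> reach H `` {a} \<union> reach H `` {b}")
  case True
  have clx: "reach H `` {x} = reach H `` {a} \<or> reach H `` {x} = reach H `` {b}"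
    using cls_eq[of x H a] cls_eq[of x H b] True by blast
  have xx: "(x, a) \<in> reach H \<or> (x, b) \<in> reach H"
  proof (cases "x \<in> reach H `` {a}")
    case True then have "(a, x) \<in> reach H" by simp
    then show ?thesis using reach_sym[of a x H] by simp
  next
    case False then have "(b, x) \<in> reach H" using \<open>x \<in> reach H `` {a} \<union> reach H `` {b}\<close> by simp
    then show ?thesis using reach_sym[of b x H] by simp
  qed
  show ?thesis
  proof (intro set_eqI iffI)
    fix y assume "y \<in> reach (insert {a, b} H) `` {x}"
    then have "(x, y) \<in> reach (insert {a, b} H)" by simp
    then have d: "(x, y) \<in> reach H \<or> ((x, a) \<in> reach H \<and> (b, y) \<in> reach H) \<or>
         ((x, b) \<in> reach H \<and> (a, y) \<in> reach H)" by (rule reach_insert)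
    have "y \<in> reach H `` {a} \<union> reach H `` {b}"
    proof (cases "(x, y) \<in> reach H")
      case True
      then have "y \<in> reach H `` {x}" by simp
      then show ?thesis using clx by (metis UnI1 UnI2)
    next
      case False
      then have "(b, y) \<in> reach H \<or> (a, y) \<in> reach H" using d by blast
      then show ?thesis by blast
    qed
    then show "y \<in> (if x \<in> reach H `` {a} \<union> reach H `` {b} then reach H `` {a} \<union> reach H `` {b} else reach H `` {x})"
      using True by simp
  next
    fix y assume "y \<in> (if x \<in> reach H `` {a} \<union> reach H `` {b} then reach H `` {a} \<union> reach H `` {b} else reach H `` {x})"
    then have y: "(a, y) \<in> reach H \<or> (b, y) \<in> reach H" using True by simp
    have "(x, y) \<in> reach H \<or> ((x, a) \<in> reach H \<and> (b, y) \<in> reach H) \<or>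
         ((x, b) \<in> reach H \<and> (a, y) \<in> reach H)"
    proof (cases "(x, a) \<in> reach H")
      case xa: True
      show ?thesis
      proof (cases "(a, y) \<in> reach H")
        case True then show ?thesis using reach_trans[OF xa True] by simp
      next
        case False then show ?thesis using xa y by simp
      qed
    next
      case xa: False
      then have xb: "(x, b) \<in> reach H" using xx by simp
      show ?thesis
      proof (cases "(b, y) \<in> reach H")
        case True then show ?thesis using reach_trans[OF xb True] by simp
      next
        case False then show ?thesis using xb y by simp
      qed
    qed
    then have "(x, y) \<in> reach (insert {a, b} H)" using reach_insert_iff[of x y a b H] by simp
    then show "y \<in> reach (insert {a, b} H) `` {x}" by simp
  qed
next
  case False
  then have "(a, x) \<notin> reach H" "(b, x) \<notin> reach H" by simp_all
  then have nxa: "(x, a) \<notin> reach H" and nxb: "(x, b) \<notin> reach H"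
    using reach_sym[of x a H] reach_sym[of x b H] by auto
  show ?thesis
  proof (intro set_eqI)
    fix y
    have "(x, y) \<in> reach (insert {a, b} H) \<longleftrightarrow> (x, y) \<in> reach H"
      using reach_insert_iff[of x y a b H] nxa nxb by simp
    then show "y \<in> reach (insert {a, b} H) `` {x} \<longleftrightarrow>
       y \<in> (if x \<in> reach H `` {a} \<union> reach H `` {b} then reach H `` {a} \<union> reach H `` {b} else reach H `` {x})"
      using False by simp
  qed
qed

lemma comps_merge:
  assumes fin: "finite V" and a: "a \<in> V" and b: "b \<in> V" and nab: "(a, b) \<notin> reach H"
  shows "comps V (insert {a, b} H) + 1 = comps V H"
proof -
  let ?c = "\<lambda>x. reach H `` {x}"
  let ?c' = "\<lambda>x. reach (insert {a, b} H) `` {x}"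
  let ?A = "?c ` V - {?c a, ?c b}"
  have img: "?c' ` V = ?A \<union> {?c a \<union> ?c b}"
  proof (intro set_eqI iffI)
    fix Z assume "Z \<in> ?c' ` V"
    then obtain x where x: "x \<in> V" "Z = ?c' x" by blast
    show "Z \<in> ?A \<union> {?c a \<union> ?c b}"
    proof (cases "x \<in> ?c a \<union> ?c b")
      case True then have "Z = ?c a \<union> ?c b" using x(2) merge_cls[OF nab, of x] by simp
      then show ?thesis by simp
    next
      case False
      have xx: "x \<in> ?c x" by simp
      have n1: "?c x \<noteq> ?c a" using False xx by blast
      have n2: "?c x \<noteq> ?c b" using False xx by blast
      have "Z = ?c x" using x(2) merge_cls[OF nab, of x] False by simp
      moreover have "?c x \<in> ?c ` V" using x(1) by (rule imageI)
      ultimately show ?thesis using n1 n2 by simp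
    qed
  next
    fix Z assume Z: "Z \<in> ?A \<union> {?c a \<union> ?c b}"
    show "Z \<in> ?c' ` V"
    proof (cases "Z = ?c a \<union> ?c b")
      case True
      have "a \<in> ?c a \<union> ?c b" by simp
      then have "Z = ?c' a" using True merge_cls[OF nab, of a] by simp
      then show ?thesis using a by (rule image_eqI)
    next
      case False
      then have "Z \<in> ?A" using Z by simp
      then obtain x where x: "x \<in> V" "Z = ?c x" "?c x \<noteq> ?c a" "?c x \<noteq> ?c b" by blast
      have "x \<notin> ?c a \<union> ?c b"
      proof
        assume "x \<in> ?c a \<union> ?c b"
        then show False using cls_eq[of x H a] cls_eq[of x H b] x(3,4) by blast
      qed
      then have "Z = ?c' x" using merge_cls[OF nab, of x] x(2) by simp
      then show ?thesis using x(1) by (rule image_eqI)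
    qed
  qed
  have ne: "?c a \<noteq> ?c b"
  proof
    assume "?c a = ?c b"
    moreover have "b \<in> ?c b" by simp
    ultimately have "b \<in> ?c a" by simp
    then show False using nab by simp
  qed
  have new: "?c a \<union> ?c b \<notin> ?A"
  proof
    assume "?c a \<union> ?c b \<in> ?A"
    then obtain x where x: "?c a \<union> ?c b = ?c x" "?c x \<noteq> ?c a" by blast
    have "a \<in> ?c a \<union> ?c b" by simp
    then have "a \<in> ?c x" using x(1) by simp
    then have "?c a = ?c x" by (rule cls_eq)
    then show False using x(2) by simp
  qed
  have f1: "finite (?c ` V)" using fin by simp
  have fA: "finite ?A" using f1 by simp
  have ina: "?c a \<in> ?c ` V" "?c b \<in> ?c ` V" using a b by auto
  have c1: "card (?c' ` V) = card ?A + 1"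
    unfolding img using fA new by simp
  have sub: "{?c a, ?c b} \<subseteq> ?c ` V" using ina by simp
  have c2: "card ?A = card (?c ` V) - card {?c a, ?c b}"
    by (rule card_Diff_subset[OF finite_subset[OF sub f1] sub])
  have c3: "card {?c a, ?c b} = 2" using ne by simp
  have c4: "card (?c ` V) \<ge> 2" using card_mono[OF f1 sub] c3 by simp
  show ?thesis unfolding comps_def using c1 c2 c3 c4 by simp
qed

lemma reach_empty: "reach {} = Id"
  unfolding reach_def by simp

lemma forest_count:
  assumes fin: "finite V" and finF: "finite F" and fo: "forest F"
    and edges: "\<forall>g\<in>F. \<exists>a b. a \<in> V \<and> b \<in> V \<and> g = {a, b}"
  shows "card F + comps V F = card V"
  using finF fo edges
proof (induction F rule: finite_induct)
  case empty
  have "comps V {} = card ((\<lambda>x. {x}) ` V)" unfolding comps_def reach_empty by simp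
  also have "\<dots> = card V" by (rule card_image) (auto simp: inj_on_def)
  finally show ?case by simp
next
  case (insert g F)
  obtain a b where ab: "a \<in> V" "b \<in> V" "g = {a, b}" using insert.prems(2) by auto
  have foF: "forest F" using insert.prems(1) by (rule forest_subset) auto
  have "(a, b) \<notin> reach (insert g F - {g})" using insert.prems(1) ab(3) unfolding forest_def by blast
  moreover have "insert g F - {g} = F" using insert.hyps(2) by auto
  ultimately have nab: "(a, b) \<notin> reach F" by simp
  have IH: "card F + comps V F = card V" using insert.IH foF insert.prems(2) by blast
  have "comps V (insert {a, b} F) + 1 = comps V F" by (rule comps_merge[OF fin ab(1,2) nab])
  then show ?case using IH insert.hyps ab(3) by simp
qed

lemma comps_pos:
  assumes "finite V" "V \<noteq> {}" shows "comps V F \<ge> 1"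
proof -
  have "finite ((\<lambda>x. reach F `` {x}) ` V)" using assms(1) by simp
  moreover have "(\<lambda>x. reach F `` {x}) ` V \<noteq> {}" using assms(2) by simp
  ultimately have "card ((\<lambda>x. reach F `` {x}) ` V) \<noteq> 0" by simp
  then show ?thesis unfolding comps_def by simp
qed

lemma comps_one_conn:
  assumes "comps V F = 1" "x \<in> V" "y \<in> V" shows "(x, y) \<in> reach F"
proof -
  have "card ((\<lambda>x. reach F `` {x}) ` V) = 1" using assms(1) unfolding comps_def .
  then obtain Z where Z: "(\<lambda>x. reach F `` {x}) ` V = {Z}" by (rule card_1_singletonE)
  have "reach F `` {x} \<in> {Z}" using Z assms(2) by (metis imageI)
  moreover have "reach F `` {y} \<in> {Z}" using Z assms(3) by (metis imageI)
  ultimately have eq: "reach F `` {x} = reach F `` {y}" by simp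
  have "y \<in> reach F `` {y}" by simp
  then have "y \<in> reach F `` {x}" by (simp only: eq)
  then show ?thesis by (rule ImageE) simp
qed

lemma bridge_exists:
  assumes fo: "forest T" and finT: "finite T" and edges: "\<forall>g\<in>T. \<exists>a b. g = {a, b}"
    and uvT: "(u, v) \<in> reach T" and nuv: "(u, v) \<notin> reach (T \<inter> A)"
  shows "\<exists>f\<in>T - A. (u, v) \<notin> reach (T - {f})"
proof (rule ccontr)
  assume "\<not> ?thesis"
  then have allf: "\<And>f. f \<in> T - A \<Longrightarrow> (u, v) \<in> reach (T - {f})" by blast
  have "S \<subseteq> T - A \<Longrightarrow> (u, v) \<in> reach (T - S)" for S
  proof (induction S rule: infinite_finite_induct)
    case (infinite S)
    then show ?case using finT finite_subset by blast
  next
    case empty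
    then show ?case using uvT by simp
  next
    case (insert f S)
    have IH: "(u, v) \<in> reach (T - S)" using insert by blast
    have fTA: "f \<in> T - A" using insert.prems by blast
    obtain a b where ab: "f = {a, b}" using edges fTA by blast
    show ?case
    proof (rule ccontr)
      assume nn: "(u, v) \<notin> reach (T - insert f S)"
      have eq: "T - S = insert {a, b} (T - insert f S)" using fTA insert.hyps(2) ab by auto
      have "(u, v) \<in> reach (insert {a, b} (T - insert f S))" using IH eq by simp
      then have d: "((u, a) \<in> reach (T - insert f S) \<and> (b, v) \<in> reach (T - insert f S)) \<or>
         ((u, b) \<in> reach (T - insert f S) \<and> (a, v) \<in> reach (T - insert f S))"
        using reach_insert nn by metis
      have sub: "reach (T - insert f S) \<subseteq> reach (T - {f})" by (rule reach_mono) auto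
      have uvf: "(u, v) \<in> reach (T - {f})" using allf fTA by blast
      have vuf: "(v, u) \<in> reach (T - {f})" using uvf by (rule reach_sym)
      have "(a, b) \<in> reach (T - {f})"
      proof (cases "(u, a) \<in> reach (T - insert f S) \<and> (b, v) \<in> reach (T - insert f S)")
        case True
        then have ua: "(u, a) \<in> reach (T - {f})" and bv: "(b, v) \<in> reach (T - {f})" using subsetD[OF sub] by auto
        have au: "(a, u) \<in> reach (T - {f})" using ua by (rule reach_sym)
        have vb: "(v, b) \<in> reach (T - {f})" using bv by (rule reach_sym)
        show ?thesis using reach_trans[OF reach_trans[OF au uvf] vb] .
      next
        case False
        then have ub: "(u, b) \<in> reach (T - {f})" and av: "(a, v) \<in> reach (T - {f})" using d subsetD[OF sub] by auto
        show ?thesis using reach_trans[OF reach_trans[OF av vuf] ub] .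
      qed
      moreover have "(a, b) \<notin> reach (T - {f})" using fo fTA ab unfolding forest_def by blast
      ultimately show False by simp
    qed
  qed
  from this[of "T - A"] have "(u, v) \<in> reach (T - (T - A))" by simp
  moreover have "T - (T - A) = T \<inter> A" by auto
  ultimately show False using nuv by simp
qed

lemma forest_acyclic:
  assumes fo: "forest F" shows "acyclic_edges F"
  unfolding acyclic_edges_def
proof
  assume "\<exists>vs. is_cycle F vs"
  then obtain vs where c: "is_cycle F vs" by blast
  let ?n = "length vs"
  have n3: "?n \<ge> 3" and dist: "distinct vs" and cons: "\<And>i. Suc i < ?n \<Longrightarrow> {vs ! i, vs ! Suc i} \<in> F"
    and cl: "{last vs, hd vs} \<in> F" using c unfolding is_cycle_def by auto
  let ?g = "{last vs, hd vs}"
  have "vs \<noteq> []" using n3 by (cases vs) auto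
  then have lastv: "last vs = vs ! (?n - 1)" by (rule last_conv_nth)
  have hdv: "hd vs = vs ! 0" using \<open>vs \<noteq> []\<close> by (rule hd_conv_nth)
  have neq: "{vs ! i, vs ! Suc i} \<noteq> ?g" if i: "Suc i < ?n" for i
  proof
    assume eq: "{vs ! i, vs ! Suc i} = ?g"
    have d: "\<And>j k. j < ?n \<Longrightarrow> k < ?n \<Longrightarrow> vs ! j = vs ! k \<Longrightarrow> j = k"
      using dist nth_eq_iff_index_eq by blast
    from eq have "(vs ! i = vs ! (?n - 1) \<and> vs ! Suc i = vs ! 0) \<or> (vs ! i = vs ! 0 \<and> vs ! Suc i = vs ! (?n - 1))"
      unfolding lastv hdv by (auto simp: doubleton_eq_iff)
    then show False
    proof
      assume "vs ! i = vs ! (?n - 1) \<and> vs ! Suc i = vs ! 0"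
      then have "vs ! Suc i = vs ! 0" by simp
      moreover have "0 < ?n" using n3 by linarith
      ultimately have "Suc i = 0" using d[of "Suc i" 0] i by blast
      then show False by simp
    next
      assume h: "vs ! i = vs ! 0 \<and> vs ! Suc i = vs ! (?n - 1)"
      have n0: "0 < ?n" "?n - 1 < ?n" "i < ?n" using n3 i by linarith+
      have "i = 0" using d[of i 0] h n0 by blast
      moreover have "Suc i = ?n - 1" using h d[of "Suc i" "?n - 1"] i n0 by blast
      ultimately show False using n3 by simp
    qed
  qed
  have path: "i < ?n \<Longrightarrow> (vs ! 0, vs ! i) \<in> reach (F - {?g})" for i
  proof (induction i)
    case 0 then show ?case by simp
  next
    case (Suc i)
    have "{vs ! i, vs ! Suc i} \<in> F - {?g}" using cons[OF Suc.prems] neq[OF Suc.prems] by simp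
    then have "(vs ! i, vs ! Suc i) \<in> reach (F - {?g})" by (rule reach_edge)
    then show ?case using Suc reach_trans by simp
  qed
  have "(hd vs, last vs) \<in> reach (F - {?g})" using path[of "?n - 1"] n3 lastv hdv by simp
  then have "(last vs, hd vs) \<in> reach (F - {?g})" by (rule reach_sym)
  moreover have "(last vs, hd vs) \<notin> reach (F - {?g})" using fo cl unfolding forest_def by blast
  ultimately show False by simp
qed

definition inside :: "('a \<times> 'a) set \<Rightarrow> 'a set \<Rightarrow> bool" where
  "inside R g \<longleftrightarrow> (\<exists>a b. g = {a, b} \<and> (a, b) \<in> R)"

fun Rseq :: "nat \<Rightarrow> 'a set \<Rightarrow> nat \<Rightarrow> (nat \<Rightarrow> 'a set set) \<Rightarrow> ('a \<times> 'a) set" where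
  "Rseq 0 V k Ts = V \<times> V"
| "Rseq (Suc i) V k Ts = Rseq i V k Ts \<inter> (\<Inter>l\<in>{..<k}. reach (Ts l \<inter> Collect (inside (Rseq i V k Ts))))"

lemma Rseq_Suc_sub: "Rseq (Suc i) V k Ts \<subseteq> Rseq i V k Ts"
  by auto

lemma Rseq_antimono: "i \<le> j \<Longrightarrow> Rseq j V k Ts \<subseteq> Rseq i V k Ts"
proof (induction j)
  case 0 then show ?case by simp
next
  case (Suc j)
  show ?case
  proof (cases "i = Suc j")
    case True then show ?thesis by simp
  next
    case False then have "i \<le> j" using Suc.prems by simp
    then show ?thesis using Suc.IH Rseq_Suc_sub[of j V k Ts] by blast
  qed
qed

definition equivon :: "'a set \<Rightarrow> ('a \<times> 'a) set \<Rightarrow> bool" where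
  "equivon V R \<longleftrightarrow> R \<subseteq> V \<times> V \<and> (\<forall>x\<in>V. (x, x) \<in> R) \<and> sym R \<and> trans R"

lemma reach_symR: "sym (reach F)"
proof (rule symI)
  fix x y assume "(x, y) \<in> reach F" then show "(y, x) \<in> reach F" by (rule reach_sym)
qed

lemma reach_transR: "trans (reach F)"
proof (rule transI)
  fix x y z assume "(x, y) \<in> reach F" "(y, z) \<in> reach F" then show "(x, z) \<in> reach F" by (rule reach_trans)
qed

lemma sym_INT: "(\<And>l. l \<in> L \<Longrightarrow> sym (r l)) \<Longrightarrow> sym (\<Inter>l\<in>L. r l)"
proof (rule symI)
  fix x y assume h: "\<And>l. l \<in> L \<Longrightarrow> sym (r l)" and xy: "(x, y) \<in> (\<Inter>l\<in>L. r l)"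
  show "(y, x) \<in> (\<Inter>l\<in>L. r l)"
  proof (rule INT_I)
    fix l assume l: "l \<in> L"
    have "(x, y) \<in> r l" using xy l by (rule INT_D)
    then show "(y, x) \<in> r l" by (rule symD[OF h[OF l]])
  qed
qed

lemma trans_INT: "(\<And>l. l \<in> L \<Longrightarrow> trans (r l)) \<Longrightarrow> trans (\<Inter>l\<in>L. r l)"
proof (rule transI)
  fix x y z assume h: "\<And>l. l \<in> L \<Longrightarrow> trans (r l)" and xy: "(x, y) \<in> (\<Inter>l\<in>L. r l)"
    and yz: "(y, z) \<in> (\<Inter>l\<in>L. r l)"
  show "(x, z) \<in> (\<Inter>l\<in>L. r l)"
  proof (rule INT_I)
    fix l assume l: "l \<in> L"
    have "(x, y) \<in> r l" using xy l by (rule INT_D)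
    moreover have "(y, z) \<in> r l" using yz l by (rule INT_D)
    ultimately show "(x, z) \<in> r l" by (rule transD[OF h[OF l]])
  qed
qed

lemma Rseq_equiv: "equivon V (Rseq i V k Ts)"
proof (induction i)
  case 0 then show ?case unfolding equivon_def by (auto simp: sym_def trans_def)
next
  case (Suc i)
  let ?R = "Rseq i V k Ts"
  let ?I = "\<Inter>l\<in>{..<k}. reach (Ts l \<inter> Collect (inside ?R))"
  have s1: "sym ?I" by (rule sym_INT) (rule reach_symR)
  have t1: "trans ?I" by (rule trans_INT) (rule reach_transR)
  have s0: "sym ?R" and t0: "trans ?R" and r0: "\<forall>x\<in>V. (x, x) \<in> ?R" and v0: "?R \<subseteq> V \<times> V"
    using Suc unfolding equivon_def by auto
  have "sym (?R \<inter> ?I)" using s0 s1 by (rule sym_Int)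
  moreover have "trans (?R \<inter> ?I)" using t0 t1 by (rule trans_Int)
  moreover have "\<forall>x\<in>V. (x, x) \<in> ?R \<inter> ?I" using r0 by simp
  moreover have "?R \<inter> ?I \<subseteq> V \<times> V" using v0 by blast
  ultimately show ?case unfolding equivon_def by simp
qed

lemma Rseq_stable_from: "Rseq (Suc i) V k Ts = Rseq i V k Ts \<Longrightarrow> i \<le> j \<Longrightarrow> Rseq j V k Ts = Rseq i V k Ts"
proof (induction j)
  case 0 then show ?case by simp
next
  case (Suc j)
  show ?case
  proof (cases "i = Suc j")
    case True then show ?thesis by simp
  next
    case False
    then have ij: "i \<le> j" using Suc.prems by simp
    have "Rseq j V k Ts = Rseq i V k Ts" using Suc.IH[OF Suc.prems(1) ij] .
    then have "Rseq (Suc j) V k Ts = Rseq (Suc i) V k Ts" by simp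
    then show ?thesis using Suc.prems(1) by simp
  qed
qed

lemma Rseq_stable:
  assumes fin: "finite V"
  shows "Rseq (Suc (card (V \<times> V))) V k Ts = Rseq (card (V \<times> V)) V k Ts"
proof (rule ccontr)
  let ?N = "card (V \<times> V)"
  assume ne: "\<not> ?thesis"
  have strict: "Rseq (Suc i) V k Ts \<noteq> Rseq i V k Ts" if "i \<le> ?N" for i
  proof
    assume "Rseq (Suc i) V k Ts = Rseq i V k Ts"
    then have "Rseq (Suc ?N) V k Ts = Rseq i V k Ts" "Rseq ?N V k Ts = Rseq i V k Ts"
      using Rseq_stable_from[of i V k Ts "Suc ?N"] Rseq_stable_from[of i V k Ts "?N"] that by simp_all
    then show False using ne by simp
  qed
  have finVV: "finite (V \<times> V)" using fin by simp
  have "card (Rseq i V k Ts) + i \<le> ?N" if "i \<le> Suc ?N" for i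
    using that
  proof (induction i)
    case 0
    have "Rseq 0 V k Ts = V \<times> V" by simp
    then show ?case by simp
  next
    case (Suc i)
    have sub: "Rseq (Suc i) V k Ts \<subset> Rseq i V k Ts" using Rseq_Suc_sub strict[of i] Suc.prems by auto
    have "Rseq i V k Ts \<subseteq> V \<times> V" using Rseq_equiv[of V i k Ts] unfolding equivon_def by blast
    then have "finite (Rseq i V k Ts)" using finVV finite_subset by blast
    then have "card (Rseq (Suc i) V k Ts) < card (Rseq i V k Ts)" using sub psubset_card_mono by blast
    then show ?case using Suc by simp
  qed
  from this[of "Suc ?N"] show False by simp
qed

lemma Rseq_cong:
  assumes "\<And>i l. i < m \<Longrightarrow> l < k \<Longrightarrow>
     reach (Ts' l \<inter> Collect (inside (Rseq i V k Ts))) = reach (Ts l \<inter> Collect (inside (Rseq i V k Ts)))"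
  shows "i \<le> m \<Longrightarrow> Rseq i V k Ts' = Rseq i V k Ts"
proof (induction i)
  case 0 then show ?case by simp
next
  case (Suc i)
  then have IH: "Rseq i V k Ts' = Rseq i V k Ts" by simp
  have "i < m" using Suc.prems by simp
  then have "\<And>l. l < k \<Longrightarrow> reach (Ts' l \<inter> Collect (inside (Rseq i V k Ts'))) = reach (Ts l \<inter> Collect (inside (Rseq i V k Ts)))"
    using assms IH by simp
  then show ?case using IH by simp
qed

lemma reach_insert_redundant:
  assumes "(u, v) \<in> reach Q" shows "reach (insert {u, v} Q) = reach Q"
proof
  have vu: "(v, u) \<in> reach Q" using assms by (rule reach_sym)
  show "reach (insert {u, v} Q) \<subseteq> reach Q"
  proof
    fix p assume "p \<in> reach (insert {u, v} Q)"
    then obtain x y where p: "p = (x, y)" "(x, y) \<in> reach (insert {u, v} Q)" by (cases p) auto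
    from reach_insert[OF p(2)] show "p \<in> reach Q" using p(1) assms vu by (metis reach_trans)
  qed
  show "reach Q \<subseteq> reach (insert {u, v} Q)" by (rule reach_mono) auto
qed

lemma exists_step:
  assumes "P 0" "\<not> P N" shows "\<exists>m<N. P m \<and> \<not> P (Suc m)"
  using assms
proof (induction N)
  case 0 then show ?case by simp
next
  case (Suc N)
  show ?case
  proof (cases "P N")
    case True then show ?thesis using Suc.prems by blast
  next
    case False
    then obtain m where "m < N" "P m" "\<not> P (Suc m)" using Suc.IH Suc.prems(1) by blast
    then show ?thesis by (intro exI[of _ m]) simp
  qed
qed

lemma reach_inside_sub:
  assumes eq: "equivon V R" and x: "x \<in> V" and r: "(x, y) \<in> reach (F \<inter> Collect (inside R))"
  shows "(x, y) \<in> R"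
proof -
  have "(x, y) \<in> {(a, b). {a, b} \<in> F \<inter> Collect (inside R)}\<^sup>*" using r unfolding reach_def .
  then show ?thesis
  proof (induction rule: rtrancl_induct)
    case base then show ?case using eq x unfolding equivon_def by blast
  next
    case (step y z)
    then have "inside R {y, z}" by simp
    then obtain a b where ab: "{y, z} = {a, b}" "(a, b) \<in> R" unfolding inside_def by blast
    have "(y, z) \<in> R"
    proof (cases "y = a")
      case True then have "z = b" using ab(1) by (auto simp: doubleton_eq_iff)
      then show ?thesis using True ab(2) by simp
    next
      case False then have "y = b" "z = a" using ab(1) by (auto simp: doubleton_eq_iff)
      then show ?thesis using ab(2) eq unfolding equivon_def sym_def by blast
    qed
    then show ?case using step.IH eq unfolding equivon_def trans_def by blast
  qed
qed

definition fam :: "'a set set \<Rightarrow> nat \<Rightarrow> (nat \<Rightarrow> 'a set set) \<Rightarrow> bool" where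
  "fam E k Ts \<longleftrightarrow> (\<forall>i<k. Ts i \<subseteq> E \<and> forest (Ts i)) \<and> (\<forall>i<k. \<forall>j<k. i \<noteq> j \<longrightarrow> Ts i \<inter> Ts j = {})"

definition sz :: "nat \<Rightarrow> (nat \<Rightarrow> 'a set set) \<Rightarrow> nat" where
  "sz k Ts = (\<Sum>i<k. card (Ts i))"

definition avec :: "'a set \<Rightarrow> nat \<Rightarrow> (nat \<Rightarrow> 'a set set) \<Rightarrow> nat \<Rightarrow> nat list" where
  "avec V k Ts N = map (\<lambda>i. \<Sum>l<k. comps V (Ts l \<inter> Collect (inside (Rseq i V k Ts)))) [0..<N]"

lemma sz_le: assumes "fam E k Ts" "finite E" shows "sz k Ts \<le> k * card E"
proof -
  have "sz k Ts \<le> (\<Sum>i<k. card E)" unfolding sz_def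
    using assms by (intro sum_mono card_mono) (auto simp: fam_def)
  then show ?thesis by simp
qed

lemma sz_update:
  assumes j: "j < k" and fin: "finite (Ts j)" "finite X"
  shows "sz k (Ts(j := X)) + card (Ts j) = sz k Ts + card X"
proof -
  have "sz k (Ts(j := X)) = card ((Ts(j := X)) j) + (\<Sum>i\<in>{..<k} - {j}. card ((Ts(j := X)) i))"
    unfolding sz_def using j by (intro sum.remove) auto
  also have "(\<Sum>i\<in>{..<k} - {j}. card ((Ts(j := X)) i)) = (\<Sum>i\<in>{..<k} - {j}. card (Ts i))"
    by (intro sum.cong) auto
  finally have a: "sz k (Ts(j := X)) = card X + (\<Sum>i\<in>{..<k} - {j}. card (Ts i))"
    by (simp only: fun_upd_same)
  have "sz k Ts = card (Ts j) + (\<Sum>i\<in>{..<k} - {j}. card (Ts i))"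
    unfolding sz_def using j by (intro sum.remove) auto
  then show ?thesis using a by simp
qed

lemma lex_less:
  assumes len: "length xs = length ys" and m: "m < length xs"
    and pre: "\<And>i. i < m \<Longrightarrow> xs ! i = ys ! i" and lt: "xs ! m < ys ! m"
  shows "(xs, ys) \<in> lex less_than"
proof -
  have t: "take m xs = take m ys" using pre len m by (intro nth_equalityI) auto
  have xs: "xs = take m xs @ xs ! m # drop (Suc m) xs" using m by (simp add: id_take_nth_drop)
  have ys: "ys = take m xs @ ys ! m # drop (Suc m) ys" using m len t by (metis id_take_nth_drop)
  show ?thesis unfolding lex_conv using len lt xs ys
    by (intro CollectI case_prodI conjI exI[of _ "take m xs"] exI[of _ "xs ! m"] exI[of _ "ys ! m"]
        exI[of _ "drop (Suc m) xs"] exI[of _ "drop (Suc m) ys"]) auto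
qed

lemma comps_sum_less:
  fixes k :: nat
  assumes j: "j < k" and lt: "comps V (A j) < comps V (B j)" and eq: "\<And>l. l < k \<Longrightarrow> l \<noteq> j \<Longrightarrow> comps V (A l) = comps V (B l)"
  shows "(\<Sum>l<k. comps V (A l)) < (\<Sum>l<k. comps V (B l))"
proof -
  have "(\<Sum>l<k. comps V (A l)) = comps V (A j) + (\<Sum>l\<in>{..<k} - {j}. comps V (A l))"
    using j by (intro sum.remove) auto
  moreover have "(\<Sum>l<k. comps V (B l)) = comps V (B j) + (\<Sum>l\<in>{..<k} - {j}. comps V (B l))"
    using j by (intro sum.remove) auto
  moreover have "(\<Sum>l\<in>{..<k} - {j}. comps V (A l)) = (\<Sum>l\<in>{..<k} - {j}. comps V (B l))"
    using eq by (intro sum.cong) auto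
  ultimately show ?thesis using lt by simp
qed

lemma fam_update:
  assumes fam: "fam E k Ts" and j: "j < k" and sub: "X \<subseteq> E" and fo: "forest X"
    and new: "\<And>l. l < k \<Longrightarrow> l \<noteq> j \<Longrightarrow> X \<inter> Ts l = {}"
  shows "fam E k (Ts(j := X))"
  unfolding fam_def
proof (intro conjI allI impI)
  fix i assume i: "i < k"
  show "(Ts(j := X)) i \<subseteq> E" using fam i sub unfolding fam_def by auto
  show "forest ((Ts(j := X)) i)" using fam i fo unfolding fam_def by auto
next
  fix i l assume i: "i < k" and l: "l < k" and il: "i \<noteq> l"
  show "(Ts(j := X)) i \<inter> (Ts(j := X)) l = {}"
  proof (cases "i = j")
    case True then show ?thesis using new[OF l] il by simp
  next
    case False
    show ?thesis
    proof (cases "l = j")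
      case True then show ?thesis using new[OF i] False by auto
    next
      case False2: False
      then show ?thesis using fam i l il False unfolding fam_def by simp
    qed
  qed
qed

lemma comps_reach_cong: "reach F = reach F' \<Longrightarrow> comps V F = comps V F'"
  unfolding comps_def by simp

theorem nw_packing:
  fixes V :: "'a set" and E :: "'a set set" and k :: nat
  assumes fin: "finite V" and Vne: "V \<noteq> {}"
    and Eedges: "\<forall>g\<in>E. \<exists>a b. a \<in> V \<and> b \<in> V \<and> a \<noteq> b \<and> g = {a, b}"
    and cond: "\<forall>R. equivon V R \<longrightarrow> k * (card ((\<lambda>x. R `` {x}) ` V) - 1) \<le> card {g\<in>E. \<not> inside R g}"
  shows "\<exists>Ts. (\<forall>i<k. Ts i \<subseteq> E \<and> forest (Ts i) \<and> (\<forall>x\<in>V. \<forall>y\<in>V. (x, y) \<in> reach (Ts i))) \<and>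
             (\<forall>i<k. \<forall>j<k. i \<noteq> j \<longrightarrow> Ts i \<inter> Ts j = {})"
proof -
  have "E \<subseteq> Pow V" using Eedges by auto
  then have finE: "finite E" using fin finite_subset by (metis finite_Pow_iff)
  let ?S = "sz k ` Collect (fam E k)"
  have fam0: "fam E k (\<lambda>_. {})" unfolding fam_def forest_def by simp
  have "?S \<subseteq> {..k * card E}" using sz_le[OF _ finE] by auto
  then have finS: "finite ?S" using finite_subset by blast
  define s where "s = Max ?S"
  have sin: "s \<in> ?S" unfolding s_def using finS fam0 by (intro Max_in) auto
  have smax: "sz k Ts \<le> s" if "fam E k Ts" for Ts unfolding s_def using finS that by (intro Max_ge) auto
  define N where "N = card (V \<times> V)"
  define Q where "Q = {avec V k Ts N | Ts. fam E k Ts \<and> sz k Ts = s}"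
  have "Q \<noteq> {}" using sin unfolding Q_def by auto
  then obtain x0 where "x0 \<in> Q" by blast
  obtain z where zQ: "z \<in> Q" and zmin: "\<And>y. (y, z) \<in> lex less_than \<Longrightarrow> y \<notin> Q"
    using wfE_min[OF wf_lex[OF wf_less_than] \<open>x0 \<in> Q\<close>] by blast
  then obtain Ts where famT: "fam E k Ts" and szT: "sz k Ts = s" and zT: "z = avec V k Ts N"
    unfolding Q_def by blast
  have minimal: "(avec V k Ts' N, avec V k Ts N) \<notin> lex less_than" if "fam E k Ts'" "sz k Ts' = s" for Ts'
  proof
    assume "(avec V k Ts' N, avec V k Ts N) \<in> lex less_than"
    then have "avec V k Ts' N \<notin> Q" using zmin zT by simp
    then show False using that unfolding Q_def by blast
  qed
  define R where "R = Rseq N V k Ts"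
  have stab: "Rseq (Suc N) V k Ts = R" unfolding R_def N_def by (rule Rseq_stable[OF fin])
  have eqR: "equivon V R" unfolding R_def by (rule Rseq_equiv)
  have Tsub: "Ts l \<subseteq> E" and Tfo: "forest (Ts l)" if "l < k" for l
    using famT that unfolding fam_def by auto
  have Tdis: "Ts i \<inter> Ts j = {}" if "i < k" "j < k" "i \<noteq> j" for i j
    using famT that unfolding fam_def by auto
  have Tfin: "finite (Ts l)" if "l < k" for l using Tsub[OF that] finE finite_subset by blast
  have Tpairs: "\<forall>g\<in>Ts l. \<exists>a b. g = {a, b}" if "l < k" for l using Tsub[OF that] Eedges by blast
  have TpairsV: "\<forall>g\<in>F. \<exists>a b. a \<in> V \<and> b \<in> V \<and> g = {a, b}" if "F \<subseteq> Ts l" "l < k" for l F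
    using Tsub[OF that(2)] that(1) Eedges by blast

  have key: "\<exists>l<k. g \<in> Ts l" if gE: "g \<in> E" and gout: "\<not> inside R g" for g
  proof (rule ccontr)
    assume nog: "\<not> (\<exists>l<k. g \<in> Ts l)"
    obtain u v where uv: "u \<in> V" "v \<in> V" "u \<noteq> v" "g = {u, v}" using Eedges gE by blast
    have "(u, v) \<notin> R" using gout uv(4) unfolding inside_def by blast
    moreover have "(u, v) \<in> Rseq 0 V k Ts" using uv by simp
    ultimately obtain m where m: "m < N" "(u, v) \<in> Rseq m V k Ts" "(u, v) \<notin> Rseq (Suc m) V k Ts"
      using exists_step[of "\<lambda>i. (u, v) \<in> Rseq i V k Ts" N] unfolding R_def by blast
    define Rm where "Rm = Rseq m V k Ts"
    define C where "C = Collect (inside Rm)"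
    have "(u, v) \<notin> (\<Inter>l\<in>{..<k}. reach (Ts l \<inter> C))" using m(2,3) unfolding C_def Rm_def by simp
    then obtain j where j: "j < k" "(u, v) \<notin> reach (Ts j \<inter> C)" by blast
    have gnot: "g \<notin> Ts l" if "l < k" for l using nog that by blast
    have gC: "{u, v} \<in> C" unfolding C_def inside_def Rm_def using m(2) by blast
    show False
    proof (cases "(u, v) \<in> reach (Ts j)")
      case False
      define Ts' where "Ts' = Ts(j := insert {u, v} (Ts j))"
      have fo': "forest (insert {u, v} (Ts j))" using forest_insert[OF Tfo[OF j(1)] False] .
      have fam': "fam E k Ts'" unfolding Ts'_def
      proof (rule fam_update[OF famT j(1)])
        show "insert {u, v} (Ts j) \<subseteq> E" using Tsub[OF j(1)] gE uv(4) by simp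
        show "forest (insert {u, v} (Ts j))" by (rule fo')
        fix l assume "l < k" "l \<noteq> j"
        then show "insert {u, v} (Ts j) \<inter> Ts l = {}" using Tdis[OF j(1) \<open>l < k\<close>] gnot[OF \<open>l < k\<close>] uv(4) by auto
      qed
      have "sz k Ts' + card (Ts j) = sz k Ts + card (insert {u, v} (Ts j))"
        unfolding Ts'_def by (rule sz_update[where Ts=Ts, OF j(1) Tfin[OF j(1)]]) (simp add: Tfin[OF j(1)])
      moreover have "card (insert {u, v} (Ts j)) = Suc (card (Ts j))"
        using Tfin[OF j(1)] gnot[OF j(1)] uv(4) by simp
      ultimately have "sz k Ts' = Suc s" using szT by simp
      then show False using smax[OF fam'] by simp
    next
      case True
      obtain f where f: "f \<in> Ts j - C" "(u, v) \<notin> reach (Ts j - {f})"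
        using bridge_exists[OF Tfo[OF j(1)] Tfin[OF j(1)] Tpairs[OF j(1)] True j(2)] by blast
      obtain a b where ab: "f = {a, b}" using Tpairs[OF j(1)] f(1) by blast
      define X where "X = insert {u, v} (Ts j - {f})"
      define Ts' where "Ts' = Ts(j := X)"
      have foX: "forest X" unfolding X_def using forest_exchange(1)[OF Tfo[OF j(1)] True _ ab f(2)] f(1) by blast
      have fam': "fam E k Ts'" unfolding Ts'_def
      proof (rule fam_update[OF famT j(1)])
        show "X \<subseteq> E" using Tsub[OF j(1)] gE uv(4) unfolding X_def by auto
        show "forest X" by (rule foX)
        fix l assume "l < k" "l \<noteq> j"
        then show "X \<inter> Ts l = {}" using Tdis[OF j(1) \<open>l < k\<close>] gnot[OF \<open>l < k\<close>] uv(4) unfolding X_def by auto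
      qed
      have "sz k Ts' + card (Ts j) = sz k Ts + card X"
        unfolding Ts'_def by (rule sz_update[where Ts=Ts, OF j(1) Tfin[OF j(1)]]) (simp add: X_def Tfin[OF j(1)])
      moreover have "card X = card (Ts j)"
      proof -
        have "card (Ts j - {f}) + 1 = card (Ts j)" using Tfin[OF j(1)] f(1)
          by (simp add: card_Diff1_less) (metis One_nat_def Suc_pred card_Diff_singleton card_gt_0_iff emptyE)
        moreover have "{u, v} \<notin> Ts j - {f}" using gnot[OF j(1)] uv(4) by simp
        ultimately show ?thesis unfolding X_def using Tfin[OF j(1)] by simp
      qed
      ultimately have szT': "sz k Ts' = s" using szT by simp
      have lev: "reach (Ts' l \<inter> Collect (inside (Rseq i V k Ts))) = reach (Ts l \<inter> Collect (inside (Rseq i V k Ts)))"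
        if i: "i < m" and l: "l < k" for i l
      proof (cases "l = j")
        case False then show ?thesis unfolding Ts'_def by simp
      next
        case True
        define Ci where "Ci = Collect (inside (Rseq i V k Ts))"
        define Qs where "Qs = Ts j \<inter> Ci"
        have "Rseq m V k Ts \<subseteq> Rseq (Suc i) V k Ts" using i by (intro Rseq_antimono) simp
        then have uvS: "(u, v) \<in> Rseq (Suc i) V k Ts" using m(2) by blast
        then have uvQ: "(u, v) \<in> reach Qs" using j(1) unfolding Qs_def Ci_def by simp
        have uvRi: "(u, v) \<in> Rseq i V k Ts" using uvS Rseq_Suc_sub by blast
        then have uvCi: "{u, v} \<in> Ci" unfolding Ci_def inside_def by blast
        have XC: "X \<inter> Ci = insert {u, v} (Qs - {f})" unfolding X_def Qs_def using uvCi by auto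
        have "reach (insert {u, v} (Qs - {f})) = reach Qs"
        proof (cases "f \<in> Ci")
          case True
          have foQ: "forest Qs" using Tfo[OF j(1)] unfolding Qs_def by (rule forest_subset) auto
          have fQ: "f \<in> Qs" using True f(1) unfolding Qs_def by simp
          have "reach (Qs - {f}) \<subseteq> reach (Ts j - {f})" unfolding Qs_def by (rule reach_mono) auto
          then have nQ: "(u, v) \<notin> reach (Qs - {f})" using f(2) by blast
          show ?thesis by (rule forest_exchange(2)[OF foQ uvQ fQ ab nQ])
        next
          case False
          then have "Qs - {f} = Qs" unfolding Qs_def by auto
          then show ?thesis using reach_insert_redundant[OF uvQ] by simp
        qed
        then show ?thesis using True XC unfolding Ts'_def Qs_def Ci_def by simp
      qed
      have Req: "Rseq i V k Ts' = Rseq i V k Ts" if "i \<le> m" for i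
        using Rseq_cong[of m k Ts' V Ts, OF lev] that by blast
      have lenA: "length (avec V k Ts' N) = N" "length (avec V k Ts N) = N" unfolding avec_def by simp_all
      have nthA: "avec V k T N ! i = (\<Sum>l<k. comps V (T l \<inter> Collect (inside (Rseq i V k T))))" if "i < N" for T i
        unfolding avec_def using that by simp
      have pre: "avec V k Ts' N ! i = avec V k Ts N ! i" if "i < m" for i
      proof -
        have iN: "i < N" using that m(1) by simp
        have "(\<Sum>l<k. comps V (Ts' l \<inter> Collect (inside (Rseq i V k Ts')))) = (\<Sum>l<k. comps V (Ts l \<inter> Collect (inside (Rseq i V k Ts))))"
        proof (intro sum.cong refl)
          fix l assume "l \<in> {..<k}"
          then show "comps V (Ts' l \<inter> Collect (inside (Rseq i V k Ts'))) = comps V (Ts l \<inter> Collect (inside (Rseq i V k Ts)))"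
            using lev[OF that] Req[of i] that by (intro comps_reach_cong) simp
        qed
        then show ?thesis using nthA[OF iN] by simp
      qed
      have lt: "avec V k Ts' N ! m < avec V k Ts N ! m"
      proof -
        have Rm': "Rseq m V k Ts' = Rm" unfolding Rm_def using Req by simp
        have XCm: "X \<inter> C = insert {u, v} (Ts j \<inter> C)" unfolding X_def using f(1) gC by auto
        have "comps V (insert {u, v} (Ts j \<inter> C)) + 1 = comps V (Ts j \<inter> C)"
          by (rule comps_merge[OF fin uv(1,2) j(2)])
        then have "comps V (Ts' j \<inter> C) < comps V (Ts j \<inter> C)" using XCm unfolding Ts'_def by simp
        then have "(\<Sum>l<k. comps V (Ts' l \<inter> C)) < (\<Sum>l<k. comps V (Ts l \<inter> C))"
          by (rule comps_sum_less[OF j(1)]) (simp add: Ts'_def)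
        then show ?thesis using nthA[OF m(1)] Rm' unfolding C_def Rm_def by simp
      qed
      have "(avec V k Ts' N, avec V k Ts N) \<in> lex less_than"
        by (rule lex_less) (use lenA m(1) pre lt in auto)
      then show False using minimal[OF fam' szT'] by simp
    qed
  qed
  define p where "p = card ((\<lambda>x. R `` {x}) ` V)"
  define C0 where "C0 = Collect (inside R)"
  have clsR: "reach (Ts l \<inter> C0) `` {x} = R `` {x}" if l: "l < k" and x: "x \<in> V" for l x
  proof (intro set_eqI iffI)
    fix y assume "y \<in> reach (Ts l \<inter> C0) `` {x}"
    then have "(x, y) \<in> reach (Ts l \<inter> C0)" by simp
    then have "(x, y) \<in> R" using reach_inside_sub[OF eqR x] unfolding C0_def by blast
    then show "y \<in> R `` {x}" by simp
  next
    fix y assume "y \<in> R `` {x}"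
    then have "(x, y) \<in> Rseq (Suc N) V k Ts" using stab by simp
    then have "(x, y) \<in> reach (Ts l \<inter> Collect (inside (Rseq N V k Ts)))" using l by simp
    then show "y \<in> reach (Ts l \<inter> C0) `` {x}" unfolding C0_def R_def by simp
  qed
  have compsR: "comps V (Ts l \<inter> C0) = p" if l: "l < k" for l
    unfolding comps_def p_def using clsR[OF l] by (metis (no_types, lifting) image_cong)
  have fc1: "card (Ts l) + comps V (Ts l) = card V" if l: "l < k" for l
    by (rule forest_count[OF fin Tfin[OF l] Tfo[OF l] TpairsV[OF _ l]]) simp
  have fc2: "card (Ts l \<inter> C0) + p = card V" if l: "l < k" for l
  proof -
    have "card (Ts l \<inter> C0) + comps V (Ts l \<inter> C0) = card V"
      by (rule forest_count[OF fin _ _ TpairsV[OF _ l]])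
        (use Tfin[OF l] forest_subset[OF Tfo[OF l], of "Ts l \<inter> C0"] in auto)
    then show ?thesis using compsR[OF l] by simp
  qed
  have split: "card (Ts l) = card (Ts l \<inter> C0) + card (Ts l - C0)" if l: "l < k" for l
  proof -
    have "Ts l = (Ts l \<inter> C0) \<union> (Ts l - C0)" by blast
    then have "card (Ts l) = card ((Ts l \<inter> C0) \<union> (Ts l - C0))" by simp
    also have "\<dots> = card (Ts l \<inter> C0) + card (Ts l - C0)"
      by (rule card_Un_disjoint) (use Tfin[OF l] in auto)
    finally show ?thesis .
  qed
  have crl: "card (Ts l - C0) + comps V (Ts l) = p" if l: "l < k" for l
    using fc1[OF l] fc2[OF l] split[OF l] by simp
  have Csub: "{g\<in>E. \<not> inside R g} \<subseteq> (\<Union>l\<in>{..<k}. Ts l - C0)"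
    using key unfolding C0_def by blast
  have "card {g\<in>E. \<not> inside R g} \<le> card (\<Union>l\<in>{..<k}. Ts l - C0)"
    by (rule card_mono[OF _ Csub]) (use Tfin in auto)
  also have "\<dots> \<le> (\<Sum>l<k. card (Ts l - C0))" by (rule card_UN_le) simp
  finally have Cle: "card {g\<in>E. \<not> inside R g} \<le> (\<Sum>l<k. card (Ts l - C0))" .
  have condR: "k * (p - 1) \<le> card {g\<in>E. \<not> inside R g}" using cond eqR unfolding p_def by blast
  have p1: "p \<ge> 1" unfolding p_def using fin Vne by (simp add: Suc_le_eq card_gt_0_iff)
  have cpos: "comps V (Ts l) \<ge> 1" for l using comps_pos[OF fin Vne] .
  have sumeq: "(\<Sum>l<k. card (Ts l - C0)) + (\<Sum>l<k. comps V (Ts l)) = k * p"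
  proof -
    have "(\<Sum>l<k. card (Ts l - C0)) + (\<Sum>l<k. comps V (Ts l)) = (\<Sum>l<k. card (Ts l - C0) + comps V (Ts l))"
      by (simp add: sum.distrib)
    also have "\<dots> = (\<Sum>l<k. p)" using crl by (intro sum.cong) auto
    finally show ?thesis by simp
  qed
  have all1: "comps V (Ts l) = 1" if l: "l < k" for l
  proof (rule ccontr)
    assume "comps V (Ts l) \<noteq> 1"
    then have c2: "comps V (Ts l) \<ge> 2" using cpos[of l] by simp
    have "(\<Sum>l<k. comps V (Ts l)) = comps V (Ts l) + (\<Sum>i\<in>{..<k} - {l}. comps V (Ts i))"
      using l by (intro sum.remove) auto
    moreover have "(\<Sum>i\<in>{..<k} - {l}. comps V (Ts i)) \<ge> (\<Sum>i\<in>{..<k} - {l}. 1)"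
      using cpos by (intro sum_mono) auto
    moreover have "(\<Sum>i\<in>{..<k} - {l}. (1::nat)) = k - 1" using l by simp
    ultimately have "(\<Sum>l<k. comps V (Ts l)) \<ge> k + 1" using c2 l by simp
    then have "(\<Sum>l<k. card (Ts l - C0)) + k + 1 \<le> k * p" using sumeq by simp
    moreover have "k * (p - 1) + k = k * p" using p1 by (cases p) (auto simp: algebra_simps)
    ultimately show False using Cle condR by simp
  qed
  show ?thesis
  proof (intro exI[of _ Ts] conjI allI impI ballI)
    fix i assume i: "i < k"
    show "Ts i \<subseteq> E" by (rule Tsub[OF i])
    show "forest (Ts i)" by (rule Tfo[OF i])
    fix x y assume "x \<in> V" "y \<in> V"
    then show "(x, y) \<in> reach (Ts i)" using comps_one_conn[OF all1[OF i]] by blast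
  next
    fix i j assume "i < k" "j < k" "i \<noteq> j"
    then show "Ts i \<inter> Ts j = {}" by (rule Tdis)
  qed
qed

lemma conn_reach: "connected_on V F \<longleftrightarrow> (\<forall>u\<in>V. \<forall>v\<in>V. (u, v) \<in> reach F)"
  unfolding connected_on_def reach_def by simp

lemma tp_eq:
  fixes V :: "'a set" and E :: "'a set set"
  assumes sg: "simple_graph V E" and V2: "card V \<ge> 2"
    and cond: "\<forall>R. equivon V R \<longrightarrow> min_degree V E * (card ((\<lambda>x. R `` {x}) ` V) - 1) \<le> card {g\<in>E. \<not> inside R g}"
  shows "tree_packing V E = min_degree V E"
proof -
  let ?d = "min_degree V E"
  have fin: "finite V" using sg unfolding simple_graph_def by simp
  have Vne: "V \<noteq> {}" using V2 by auto
  have Eedges: "\<forall>g\<in>E. \<exists>a b. a \<in> V \<and> b \<in> V \<and> a \<noteq> b \<and> g = {a, b}" using sg unfolding simple_graph_def by blast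
  let ?K = "{k. \<exists>Ts :: nat \<Rightarrow> 'a set set. (\<forall>i<k. spanning_tree V E (Ts i)) \<and> (\<forall>i<k. \<forall>j<k. i \<noteq> j \<longrightarrow> Ts i \<inter> Ts j = {})}"
  obtain Ts where Ts: "\<forall>i<?d. Ts i \<subseteq> E \<and> forest (Ts i) \<and> (\<forall>x\<in>V. \<forall>y\<in>V. (x, y) \<in> reach (Ts i))"
    "\<forall>i<?d. \<forall>j<?d. i \<noteq> j \<longrightarrow> Ts i \<inter> Ts j = {}"
    using nw_packing[OF fin Vne Eedges cond] by blast
  have dK: "?d \<in> ?K"
  proof (rule CollectI, rule exI[of _ Ts], intro conjI allI impI)
    fix i assume i: "i < ?d"
    show "spanning_tree V E (Ts i)" unfolding spanning_tree_def conn_reach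
      using Ts(1) i forest_acyclic by blast
  next
    fix i j assume "i < ?d" "j < ?d" "i \<noteq> j" then show "Ts i \<inter> Ts j = {}" using Ts(2) by blast
  qed
  obtain v where v: "v \<in> V" "degree E v = ?d"
  proof -
    have "?d \<in> (\<lambda>v. degree E v) ` V" unfolding min_degree_def using fin Vne by (intro Min_in) auto
    then obtain v' where "v' \<in> V" "?d = degree E v'" by (rule imageE)
    then show ?thesis using that by simp
  qed
  obtain w where w: "w \<in> V" "w \<noteq> v"
  proof -
    have "card (V - {v}) \<ge> 1" using V2 v(1) fin by (simp add: card_Diff_singleton)
    then have "V - {v} \<noteq> {}" by (metis card.empty not_one_le_zero)
    then show ?thesis using that by blast
  qed
  have upper: "k \<le> ?d" if kK: "k \<in> ?K" for k
  proof -
    obtain Us where Us: "\<forall>i<k. spanning_tree V E (Us i)" "\<forall>i<k. \<forall>j<k. i \<noteq> j \<longrightarrow> Us i \<inter> Us j = {}"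
      using kK by blast
    have ex: "\<exists>z. {v, z} \<in> Us i" if i: "i < k" for i
    proof -
      have "(v, w) \<in> {(x, y). {x, y} \<in> Us i}\<^sup>*" using Us(1) i v(1) w(1)
        unfolding spanning_tree_def connected_on_def by blast
      then show ?thesis
      proof (cases rule: converse_rtranclE)
        case base then show ?thesis using w(2) by simp
      next
        case (step z) then show ?thesis by blast
      qed
    qed
    define z where "z i = (SOME z. {v, z} \<in> Us i)" for i
    have zi: "{v, z i} \<in> Us i" if "i < k" for i unfolding z_def using ex[OF that] by (rule someI_ex)
    have inj: "inj_on z {..<k}"
    proof (rule inj_onI)
      fix i j assume i: "i \<in> {..<k}" and j: "j \<in> {..<k}" and eq: "z i = z j"
      show "i = j"
      proof (rule ccontr)
        assume "i \<noteq> j"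
        then have "Us i \<inter> Us j = {}" using Us(2) i j by simp
        moreover have "{v, z i} \<in> Us i" using zi i by simp
        moreover have "{v, z i} \<in> Us j" using zi[of j] j eq by simp
        ultimately show False by blast
      qed
    qed
    have sub: "z ` {..<k} \<subseteq> {u. {u, v} \<in> E}"
    proof
      fix u assume "u \<in> z ` {..<k}"
      then obtain i where i: "i < k" "u = z i" by blast
      have "Us i \<subseteq> E" using Us(1) i(1) unfolding spanning_tree_def by blast
      then have "{v, u} \<in> E" using zi[OF i(1)] i(2) by blast
      then show "u \<in> {u. {u, v} \<in> E}" by (simp add: insert_commute)
    qed
    have finN: "finite {u. {u, v} \<in> E}"
    proof (rule finite_subset[OF _ fin])
      show "{u. {u, v} \<in> E} \<subseteq> V"
      proof
        fix u assume "u \<in> {u. {u, v} \<in> E}"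
        then obtain a b where "a \<in> V" "b \<in> V" "{u, v} = {a, b}" using Eedges by blast
        then show "u \<in> V" by (auto simp: doubleton_eq_iff)
      qed
    qed
    have "k = card (z ` {..<k})" using inj by (simp add: card_image)
    also have "\<dots> \<le> card {u. {u, v} \<in> E}" by (rule card_mono[OF finN sub])
    also have "\<dots> = ?d" using v(2) unfolding degree_def by simp
    finally show ?thesis .
  qed
  have finK: "finite ?K" by (rule finite_subset[of _ "{..?d}"]) (use upper in auto)
  show ?thesis unfolding tree_packing_def
    by (rule Max_eqI[OF finK]) (use upper dK in auto)
qed

lemma card_filter_sum: "finite B \<Longrightarrow> card {b\<in>B. r b} = (\<Sum>b\<in>B. if r b then 1 else 0)"
proof -
  assume fB: "finite B"
  have "card {b\<in>B. r b} = (\<Sum>b\<in>{b\<in>B. r b}. (1::nat))" by simp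
  also have "\<dots> = (\<Sum>b\<in>B. if r b then 1 else 0)" using fB by (rule sum.inter_filter)
  finally show ?thesis .
qed

lemma dc:
  assumes "finite A" "finite B"
  shows "(\<Sum>a\<in>A. card {b\<in>B. r a b}) = (\<Sum>b\<in>B. card {a\<in>A. r a b})"
proof -
  have "(\<Sum>a\<in>A. card {b\<in>B. r a b}) = (\<Sum>a\<in>A. \<Sum>b\<in>B. if r a b then 1 else 0)"
    using assms(2) by (simp add: card_filter_sum)
  also have "\<dots> = (\<Sum>b\<in>B. \<Sum>a\<in>A. if r a b then 1 else 0)" by (rule sum.swap)
  also have "\<dots> = (\<Sum>b\<in>B. card {a\<in>A. r a b})"
    using assms(1) by (simp add: card_filter_sum)
  finally show ?thesis .
qed

lemma sg_finE: "simple_graph V E \<Longrightarrow> finite E"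
proof -
  assume sg: "simple_graph V E"
  have "E \<subseteq> Pow V" using sg unfolding simple_graph_def by auto
  moreover have "finite V" using sg unfolding simple_graph_def by simp
  ultimately show ?thesis by (metis finite_Pow_iff finite_subset)
qed

lemma deg_edges:
  assumes sg: "simple_graph V E"
  shows "degree E v = card {g\<in>E. v \<in> g}"
proof -
  have eq: "{g\<in>E. v \<in> g} = (\<lambda>u. {u, v}) ` {u. {u, v} \<in> E}"
  proof (intro set_eqI iffI)
    fix g assume g: "g \<in> {g\<in>E. v \<in> g}"
    then obtain a b where ab: "g = {a, b}" using sg unfolding simple_graph_def by blast
    show "g \<in> (\<lambda>u. {u, v}) ` {u. {u, v} \<in> E}"
    proof (cases "v = a")
      case True
      then have "g = {b, v}" using ab by auto
      then show ?thesis using g by (intro image_eqI[of _ _ b]) auto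
    next
      case False
      then have "v = b" using g ab by auto
      then have "g = {a, v}" using ab by auto
      then show ?thesis using g by (intro image_eqI[of _ _ a]) auto
    qed
  next
    fix g assume "g \<in> (\<lambda>u. {u, v}) ` {u. {u, v} \<in> E}"
    then show "g \<in> {g\<in>E. v \<in> g}" by auto
  qed
  have inj: "inj_on (\<lambda>u. {u, v}) {u. {u, v} \<in> E}"
    by (rule inj_onI) (auto simp: doubleton_eq_iff)
  show ?thesis unfolding degree_def eq using inj by (simp add: card_image)
qed

lemma card_two:
  assumes "a \<noteq> b" shows "card ({a, b} \<inter> X) = (if {a, b} \<subseteq> X then 2 else 0) + (if {a, b} \<inter> X \<noteq> {} \<and> \<not> {a, b} \<subseteq> X then 1 else 0)"
  using assms by (cases "a \<in> X"; cases "b \<in> X") auto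

lemma handshake:
  assumes sg: "simple_graph V E" and fX: "finite X"
  shows "(\<Sum>v\<in>X. degree E v) = 2 * card {g\<in>E. g \<subseteq> X} + card {g\<in>E. g \<inter> X \<noteq> {} \<and> \<not> g \<subseteq> X}"
proof -
  have fE: "finite E" using sg by (rule sg_finE)
  have "(\<Sum>v\<in>X. degree E v) = (\<Sum>v\<in>X. card {g\<in>E. v \<in> g})" using deg_edges[OF sg] by simp
  also have "\<dots> = (\<Sum>g\<in>E. card {v\<in>X. v \<in> g})" by (rule dc[OF fX fE])
  also have "\<dots> = (\<Sum>g\<in>E. (if g \<subseteq> X then 2 else 0) + (if g \<inter> X \<noteq> {} \<and> \<not> g \<subseteq> X then 1 else 0))"
  proof (rule sum.cong[OF refl])
    fix g assume "g \<in> E"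
    then obtain a b where ab: "a \<noteq> b" "g = {a, b}" using sg unfolding simple_graph_def by blast
    have "{v\<in>X. v \<in> g} = g \<inter> X" by auto
    then show "card {v\<in>X. v \<in> g} = (if g \<subseteq> X then 2 else 0) + (if g \<inter> X \<noteq> {} \<and> \<not> g \<subseteq> X then 1 else 0)"
      using card_two[OF ab(1), of X] ab(2) by simp
  qed
  also have "\<dots> = (\<Sum>g\<in>E. if g \<subseteq> X then 2 else 0) + (\<Sum>g\<in>E. if g \<inter> X \<noteq> {} \<and> \<not> g \<subseteq> X then 1 else 0)"
    by (rule sum.distrib)
  also have "(\<Sum>g\<in>E. if g \<subseteq> X then 2 else 0) = 2 * card {g\<in>E. g \<subseteq> X}"
  proof -
    have "(\<Sum>g\<in>E. if g \<subseteq> X then 2 else 0) = (\<Sum>g\<in>{g\<in>E. g \<subseteq> X}. (2::nat))"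
      using fE by (rule sum.inter_filter[symmetric])
    then show ?thesis by simp
  qed
  also have "(\<Sum>g\<in>E. if g \<inter> X \<noteq> {} \<and> \<not> g \<subseteq> X then 1 else 0) = card {g\<in>E. g \<inter> X \<noteq> {} \<and> \<not> g \<subseteq> X}"
    using card_filter_sum[OF fE] by simp
  finally show ?thesis .
qed

lemma light_inj:
  assumes sg: "simple_graph V E" and H0: "H0 \<subseteq> V"
    and a3: "\<forall>w\<in>V. card {u. Lt u \<and> {u, w} \<in> E} \<le> 1"
    and F: "F \<subseteq> {g\<in>E. \<exists>a b. g = {a, b} \<and> a \<in> H0 \<and> Lt b}"
  shows "card F \<le> card H0"
proof -
  have finV: "finite V" using sg unfolding simple_graph_def by simp
  have finH: "finite H0" using finite_subset[OF H0 finV] .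
  define phi where "phi g = (SOME a. a \<in> H0 \<and> (\<exists>b. g = {a, b} \<and> Lt b))" for g
  have phi: "phi g \<in> H0 \<and> (\<exists>b. g = {phi g, b} \<and> Lt b)" if "g \<in> F" for g
  proof -
    have "\<exists>a. a \<in> H0 \<and> (\<exists>b. g = {a, b} \<and> Lt b)" using F that by blast
    then show ?thesis unfolding phi_def by (rule someI_ex)
  qed
  have inj: "inj_on phi F"
  proof (rule inj_onI)
    fix g g' assume g: "g \<in> F" and g': "g' \<in> F" and eq: "phi g = phi g'"
    obtain b where b: "g = {phi g, b}" "Lt b" using phi[OF g] by blast
    obtain b' where b': "g' = {phi g, b'}" "Lt b'" using phi[OF g'] eq by auto
    let ?a = "phi g"
    have aV: "?a \<in> V" using phi[OF g] H0 by blast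
    have "g \<in> E" "g' \<in> E" using F g g' by auto
    then have e: "{b, ?a} \<in> E" "{b', ?a} \<in> E" using b(1) b'(1) by (simp_all add: insert_commute)
    define U where "U = {u. Lt u \<and> {u, ?a} \<in> E}"
    have cU: "card U \<le> 1" using a3 aV unfolding U_def by blast
    have finU: "finite U"
    proof (rule finite_subset[OF _ finV])
      show "U \<subseteq> V"
      proof
        fix u assume "u \<in> U"
        then have "{u, ?a} \<in> E" unfolding U_def by simp
        then obtain x y where "x \<in> V" "y \<in> V" "{u, ?a} = {x, y}" using sg unfolding simple_graph_def by blast
        then show "u \<in> V" by (auto simp: doubleton_eq_iff)
      qed
    qed
    have "b \<in> U" "b' \<in> U" using e b(2) b'(2) unfolding U_def by auto
    then have "b = b'" using cU finU by (metis card_le_Suc0_iff_eq One_nat_def)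
    then show "g = g'" using b(1) b'(1) by simp
  qed
  have "phi ` F \<subseteq> H0" using phi by blast
  then have "card (phi ` F) \<le> card H0" using finH by (rule card_mono[rotated])
  then show ?thesis using card_image[OF inj] by simp
qed

lemma mindeg_le:
  assumes "finite V" "v \<in> V" shows "min_degree V E \<le> degree E v"
  unfolding min_degree_def using assms by (intro Min_le) auto

lemma small_part:
  fixes V :: "'a set" and E :: "'a set set" and \<epsilon> \<zeta> :: real and n :: nat and X \<Lambda> :: "'a set"
  assumes sg: "simple_graph V E"
    and a2: "\<forall>u v. light V E \<epsilon> u \<and> light V E \<epsilon> v \<longrightarrow> {u, v} \<notin> E"
    and a3: "\<forall>w\<in>V. card {u. light V E \<epsilon> u \<and> {u, w} \<in> E} \<le> 1"
    and b: "\<forall>S. S \<subseteq> V \<and> real (card S) < \<zeta> * real n \<longrightarrow>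
              real (card (induced_edges E S)) \<le> (\<epsilon> / 4) * avg_deg V E * real (card S)"
    and a1: "real (min_degree V E) \<le> (\<epsilon> / 4) * avg_deg V E"
    and big: "\<epsilon> * avg_deg V E \<ge> 12"
    and XV: "X \<subseteq> V" and Xs: "real (card X) < \<zeta> * real n" and XL: "X \<inter> \<Lambda> = {}"
    and LL: "\<forall>x\<in>\<Lambda>. light V E \<epsilon> x"
    and shape: "card X \<ge> 2 \<or> (\<exists>x. X = {x} \<and> \<not> light V E \<epsilon> x)"
  shows "2 * real (min_degree V E) \<le> real (card {g\<in>E. g \<inter> X \<noteq> {} \<and> \<not> g \<subseteq> X \<and> g \<inter> \<Lambda> = {}})"
proof -
  define d where "d = min_degree V E"
  define D where "D = avg_deg V E"
  define L where "L = light V E \<epsilon>"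
  have finV: "finite V" using sg unfolding simple_graph_def by simp
  have finE: "finite E" using sg by (rule sg_finE)
  have finX: "finite X" using finite_subset[OF XV finV] .
  define H where "H = {v\<in>X. \<not> L v}"
  have HX: "H \<subseteq> X" unfolding H_def by blast
  have HV: "H \<subseteq> V" using HX XV by blast
  have finH: "finite H" using finite_subset[OF HX finX] .
  have degd: "real d \<le> real (degree E v)" if "v \<in> V" for v
    using mindeg_le[OF finV that] unfolding d_def by simp
  have degH: "real d + \<epsilon> * D < real (degree E v)" if "v \<in> V" "\<not> L v" for v
    using that unfolding L_def light_def d_def D_def by auto
  have S1: "real d * real (card X) + \<epsilon> * D * real (card H) \<le> (\<Sum>v\<in>X. real (degree E v))"
  proof -
    have "(\<Sum>v\<in>X. real d + (if \<not> L v then \<epsilon> * D else 0)) \<le> (\<Sum>v\<in>X. real (degree E v))"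
    proof (rule sum_mono)
      fix v assume v: "v \<in> X"
      then have vV: "v \<in> V" using XV by blast
      show "real d + (if \<not> L v then \<epsilon> * D else 0) \<le> real (degree E v)"
        using degd[OF vV] degH[OF vV] by (cases "L v") auto
    qed
    moreover have "(\<Sum>v\<in>X. real d + (if \<not> L v then \<epsilon> * D else 0)) = real d * real (card X) + \<epsilon> * D * real (card H)"
    proof -
      have "(\<Sum>v\<in>X. real d + (if \<not> L v then \<epsilon> * D else 0)) = (\<Sum>v\<in>X. real d) + (\<Sum>v\<in>X. if \<not> L v then \<epsilon> * D else 0)"
        by (rule sum.distrib)
      moreover have "(\<Sum>v\<in>X. if \<not> L v then \<epsilon> * D else 0) = (\<Sum>v\<in>H. \<epsilon> * D)"
        unfolding H_def using finX by (rule sum.inter_filter[symmetric])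
      ultimately show ?thesis by (simp add: mult.commute)
    qed
    ultimately show ?thesis by simp
  qed
  define IX where "IX = {g\<in>E. g \<subseteq> X}"
  define OX where "OX = {g\<in>E. g \<inter> X \<noteq> {} \<and> \<not> g \<subseteq> X}"
  define O' where "O' = {g\<in>E. g \<inter> X \<noteq> {} \<and> \<not> g \<subseteq> X \<and> g \<inter> \<Lambda> = {}}"
  define LE where "LE = {g\<in>E. \<exists>a b. g = {a, b} \<and> a \<in> H \<and> L b}"
  have hs: "(\<Sum>v\<in>X. degree E v) = 2 * card IX + card OX"
    unfolding IX_def OX_def by (rule handshake[OF sg finX])
  have hsr: "(\<Sum>v\<in>X. real (degree E v)) = 2 * real (card IX) + real (card OX)"
  proof -
    have "(\<Sum>v\<in>X. real (degree E v)) = real (\<Sum>v\<in>X. degree E v)" by simp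
    then show ?thesis using hs by simp
  qed
  have cLE: "card LE \<le> card H"
    by (rule light_inj[OF sg HV a3[folded L_def]]) (auto simp: LE_def)
  have IXsub: "IX \<subseteq> induced_edges E H \<union> LE"
  proof
    fix g assume g: "g \<in> IX"
    then have gE: "g \<in> E" and gX: "g \<subseteq> X" unfolding IX_def by auto
    obtain a b where ab: "g = {a, b}" using sg gE unfolding simple_graph_def by blast
    show "g \<in> induced_edges E H \<union> LE"
    proof (cases "g \<subseteq> H")
      case True then show ?thesis unfolding induced_edges_def using gE by simp
    next
      case False
      then obtain c where c: "c \<in> g" "c \<notin> H" by blast
      then have cX: "c \<in> X" using gX by blast
      then have Lc: "L c" using c(2) unfolding H_def by simp
      obtain e where ge: "g = {e, c}" using ab c(1) by auto
      have eX: "e \<in> X" using gX ge by simp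
      have "{c, e} \<in> E" using gE ge by (simp add: insert_commute)
      then have "\<not> L e" using a2[folded L_def] Lc by blast
      then have "e \<in> H" using eX unfolding H_def by simp
      then show ?thesis unfolding LE_def using gE ge Lc by blast
    qed
  qed
  have cIX: "card IX \<le> card (induced_edges E H) + card LE"
  proof -
    have "card IX \<le> card (induced_edges E H \<union> LE)"
      by (rule card_mono[OF _ IXsub]) (use finE in \<open>auto simp: induced_edges_def LE_def\<close>)
    also have "\<dots> \<le> card (induced_edges E H) + card LE" by (rule card_Un_le)
    finally show ?thesis .
  qed
  have cIH: "real (card (induced_edges E H)) \<le> (\<epsilon> / 4) * D * real (card H)"
  proof -
    have "card H \<le> card X" using card_mono[OF finX HX] .
    then have "real (card H) < \<zeta> * real n" using Xs by linarith
    then show ?thesis using b HV unfolding D_def by blast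
  qed
  have OXsub: "OX \<subseteq> O' \<union> LE"
  proof
    fix g assume g: "g \<in> OX"
    then have gE: "g \<in> E" and gX: "g \<inter> X \<noteq> {}" and gnX: "\<not> g \<subseteq> X" unfolding OX_def by auto
    show "g \<in> O' \<union> LE"
    proof (cases "g \<inter> \<Lambda> = {}")
      case True then show ?thesis unfolding O'_def using gE gX gnX by simp
    next
      case False
      then obtain c where c: "c \<in> g" "c \<in> \<Lambda>" by blast
      have Lc: "L c" using LL c(2) unfolding L_def by blast
      have cnX: "c \<notin> X" using XL c(2) by blast
      obtain a b where ab: "g = {a, b}" using sg gE unfolding simple_graph_def by blast
      obtain e where ge: "g = {e, c}" using ab c(1) by auto
      have eX: "e \<in> X" using gX ge cnX by auto
      have "{c, e} \<in> E" using gE ge by (simp add: insert_commute)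
      then have "\<not> L e" using a2[folded L_def] Lc by blast
      then have "e \<in> H" using eX unfolding H_def by simp
      then show ?thesis unfolding LE_def using gE ge Lc by blast
    qed
  qed
  have cOX: "card OX \<le> card O' + card LE"
  proof -
    have "card OX \<le> card (O' \<union> LE)"
      by (rule card_mono[OF _ OXsub]) (use finE in \<open>auto simp: O'_def LE_def\<close>)
    also have "\<dots> \<le> card O' + card LE" by (rule card_Un_le)
    finally show ?thesis .
  qed
  have main: "real d * real (card X) + (\<epsilon> * D / 2 - 3) * real (card H) \<le> real (card O')"
  proof -
    have r1: "real (card IX) \<le> (\<epsilon> / 4) * D * real (card H) + real (card H)"
      using cIX cIH cLE by linarith
    have r2: "real (card OX) \<le> real (card O') + real (card H)" using cOX cLE by linarith
    have "real d * real (card X) + \<epsilon> * D * real (card H) \<le> 2 * real (card IX) + real (card OX)"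
      using S1 hsr by simp
    then show ?thesis using r1 r2 by (simp add: algebra_simps)
  qed
  have ED: "\<epsilon> * D \<ge> 12" using big unfolding D_def .
  have dD: "real d \<le> \<epsilon> * D / 4" using a1 unfolding d_def D_def by simp
  have d0: "real d \<ge> 0" by simp
  have "2 * real d \<le> real (card O')"
  proof (cases "card X \<ge> 2")
    case True
    have "2 * real d \<le> real d * real (card X)" using True d0
      by (metis mult.commute mult_left_mono of_nat_le_iff of_nat_numeral)
    moreover have "0 \<le> (\<epsilon> * D / 2 - 3) * real (card H)" using ED by simp
    ultimately show ?thesis using main by linarith
  next
    case False
    then obtain x where x: "X = {x}" "\<not> L x" using shape unfolding L_def by auto
    have "H = {x}" unfolding H_def using x by auto
    then have "card H = 1" "card X = 1" using x by simp_all
    then have "real d + (\<epsilon> * D / 2 - 3) \<le> real (card O')" using main by simp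
    moreover have "real d \<le> \<epsilon> * D / 2 - 3" using dD ED by linarith
    ultimately show ?thesis by linarith
  qed
  then show ?thesis unfolding d_def O'_def .
qed

lemma part_cond:
  fixes V :: "'a set" and E :: "'a set set" and \<epsilon> \<zeta> \<eta> :: real and n :: nat and R
  assumes sg: "simple_graph V E"
    and a1: "real (min_degree V E) \<le> (\<epsilon> / 4) * avg_deg V E"
    and a2: "\<forall>u v. light V E \<epsilon> u \<and> light V E \<epsilon> v \<longrightarrow> {u, v} \<notin> E"
    and a3: "\<forall>w\<in>V. card {u. light V E \<epsilon> u \<and> {u, w} \<in> E} \<le> 1"
    and b: "\<forall>S. S \<subseteq> V \<and> real (card S) < \<zeta> * real n \<longrightarrow>
              real (card (induced_edges E S)) \<le> (\<epsilon> / 4) * avg_deg V E * real (card S)"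
    and c: "\<forall>S S'. S \<subseteq> V \<and> S' \<subseteq> V \<and> S \<inter> S' = {} \<and>
              card S \<ge> card S' \<and> real (card S') \<ge> \<zeta> * real n \<longrightarrow>
              real (card (cross_edges E S S')) \<ge> \<eta> * avg_deg V E * real n"
    and big: "\<epsilon> * avg_deg V E \<ge> 12"
    and etan: "\<eta> * real n \<ge> \<epsilon> / 2"
    and epos: "\<epsilon> > 0"
    and eqR: "equivon V R"
  shows "min_degree V E * (card ((\<lambda>x. R `` {x}) ` V) - 1) \<le> card {g\<in>E. \<not> inside R g}"
proof -
  define d where "d = min_degree V E"
  define D where "D = avg_deg V E"
  define L where "L = light V E \<epsilon>"
  have finV: "finite V" using sg unfolding simple_graph_def by simp
  have finE: "finite E" using sg by (rule sg_finE)
  have RV: "R \<subseteq> V \<times> V" and Rrefl: "\<forall>x\<in>V. (x, x) \<in> R" and Rsym: "sym R" and Rtrans: "trans R"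
    using eqR unfolding equivon_def by auto
  have Dpos: "D > 0"
  proof (rule ccontr)
    assume "\<not> D > 0"
    then have "\<epsilon> * D \<le> 0" using epos by (simp add: mult_nonneg_nonpos)
    then show False using big unfolding D_def by simp
  qed
  define P where "P = (\<lambda>x. R `` {x}) ` V"
  have finP: "finite P" unfolding P_def using finV by simp
  have pa: "X = R `` {a}" if X: "X \<in> P" and a: "a \<in> X" for X a
  proof -
    obtain x where x: "x \<in> V" "X = R `` {x}" using X unfolding P_def by blast
    have xa: "(x, a) \<in> R" using a x(2) by simp
    have ax: "(a, x) \<in> R" using xa by (rule symD[OF Rsym])
    show ?thesis
    proof (intro set_eqI iffI)
      fix y assume "y \<in> X" then have "(x, y) \<in> R" using x(2) by simp
      then have "(a, y) \<in> R" by (rule transD[OF Rtrans ax])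
      then show "y \<in> R `` {a}" by simp
    next
      fix y assume "y \<in> R `` {a}" then have "(a, y) \<in> R" by simp
      then have "(x, y) \<in> R" by (rule transD[OF Rtrans xa])
      then show "y \<in> X" using x(2) by simp
    qed
  qed
  have pV: "X \<subseteq> V" if "X \<in> P" for X using that RV unfolding P_def by blast
  have ins: "inside R g \<longleftrightarrow> (a, b) \<in> R" if "g = {a, b}" for g a b
  proof
    assume "inside R g"
    then obtain a' b' where "g = {a', b'}" "(a', b') \<in> R" unfolding inside_def by blast
    then have h: "(a' = a \<and> b' = b) \<or> (a' = b \<and> b' = a)" "(a', b') \<in> R" using that by (auto simp: doubleton_eq_iff)
    show "(a, b) \<in> R"
    proof (cases "a' = a \<and> b' = b")
      case True then show ?thesis using h(2) by simp
    next
      case False then have "(b, a) \<in> R" using h by auto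
      then show ?thesis by (rule symD[OF Rsym])
    qed
  next
    assume "(a, b) \<in> R" then show "inside R g" using that unfolding inside_def by blast
  qed
  define \<Lambda> where "\<Lambda> = {x\<in>V. L x \<and> R `` {x} = {x}}"
  define \<Lambda>P where "\<Lambda>P = (\<lambda>x. {x}) ` \<Lambda>"
  have finL: "finite \<Lambda>" unfolding \<Lambda>_def using finV by simp
  have LPsub: "\<Lambda>P \<subseteq> P" unfolding \<Lambda>P_def \<Lambda>_def P_def by force
  have cLP: "card \<Lambda>P = card \<Lambda>" unfolding \<Lambda>P_def by (rule card_image) (simp add: inj_on_def)
  define Q where "Q = P - \<Lambda>P"
  define Qs where "Qs = {X\<in>Q. real (card X) < \<zeta> * real n}"
  define Qb where "Qb = Q - Qs"
  have finQ: "finite Q" unfolding Q_def using finP by simp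
  have cP: "card P = card \<Lambda> + card Qs + card Qb"
  proof -
    have "card (P - \<Lambda>P) = card P - card \<Lambda>P" by (rule card_Diff_subset[OF finite_subset[OF LPsub finP] LPsub])
    moreover have "card \<Lambda>P \<le> card P" by (rule card_mono[OF finP LPsub])
    ultimately have cPQ: "card P = card \<Lambda>P + card Q" unfolding Q_def by simp
    have QsQ: "Qs \<subseteq> Q" unfolding Qs_def by blast
    have "card (Q - Qs) = card Q - card Qs" by (rule card_Diff_subset[OF finite_subset[OF QsQ finQ] QsQ])
    moreover have "card Qs \<le> card Q" by (rule card_mono[OF finQ QsQ])
    ultimately have "card Q = card Qs + card Qb" unfolding Qb_def by simp
    then show ?thesis using cLP cPQ by simp
  qed
  define C where "C = {g\<in>E. \<not> inside R g}"
  define CL where "CL = {g\<in>C. g \<inter> \<Lambda> \<noteq> {}}"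
  define C' where "C' = C - CL"
  have finC: "finite C" unfolding C_def using finE by simp
  have cC: "card C = card CL + card C'"
  proof -
    have "CL \<subseteq> C" unfolding CL_def by blast
    then have "card (C - CL) = card C - card CL" "card CL \<le> card C"
      using card_Diff_subset[OF finite_subset[OF \<open>CL \<subseteq> C\<close> finC] \<open>CL \<subseteq> C\<close>] card_mono[OF finC \<open>CL \<subseteq> C\<close>] by simp_all
    then show ?thesis unfolding C'_def by simp
  qed
  have claimA: "d * card \<Lambda> \<le> card CL"
  proof -
    define Ex where "Ex x = {g\<in>E. x \<in> g}" for x
    have cEx: "d \<le> card (Ex x)" if "x \<in> \<Lambda>" for x
    proof -
      have "x \<in> V" using that unfolding \<Lambda>_def by simp
      then have "d \<le> degree E x" unfolding d_def by (rule mindeg_le[OF finV])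
      then show ?thesis unfolding Ex_def using deg_edges[OF sg] by simp
    qed
    have sub: "(\<Union>x\<in>\<Lambda>. Ex x) \<subseteq> CL"
    proof
      fix g assume "g \<in> (\<Union>x\<in>\<Lambda>. Ex x)"
      then obtain x where x: "x \<in> \<Lambda>" "g \<in> E" "x \<in> g" unfolding Ex_def by blast
      obtain a b where ab: "a \<noteq> b" "g = {a, b}" using sg x(2) unfolding simple_graph_def by blast
      obtain y where gy: "g = {x, y}" "y \<noteq> x" using ab x(3) by auto
      have Rx: "R `` {x} = {x}" using x(1) unfolding \<Lambda>_def by simp
      have "\<not> inside R g"
      proof
        assume "inside R g"
        then have "(x, y) \<in> R" using ins[OF gy(1)] by simp
        then have "y \<in> R `` {x}" by simp
        then show False using Rx gy(2) by simp
      qed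
      then show "g \<in> CL" unfolding CL_def C_def using x by blast
    qed
    have disj: "Ex x \<inter> Ex x' = {}" if "x \<in> \<Lambda>" "x' \<in> \<Lambda>" "x \<noteq> x'" for x x'
    proof (rule ccontr)
      assume "Ex x \<inter> Ex x' \<noteq> {}"
      then obtain g where g: "g \<in> E" "x \<in> g" "x' \<in> g" unfolding Ex_def by blast
      obtain a b where ab: "g = {a, b}" using sg g(1) unfolding simple_graph_def by blast
      have "g = {x, x'}" using ab g(2,3) that(3) by auto
      moreover have "L x" "L x'" using that unfolding \<Lambda>_def by auto
      ultimately show False using a2 g(1) unfolding L_def by blast
    qed
    have finEx: "finite (Ex x)" for x unfolding Ex_def using finE by simp
    have "card (\<Union>x\<in>\<Lambda>. Ex x) = (\<Sum>x\<in>\<Lambda>. card (Ex x))"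
      by (rule card_UN_disjoint[OF finL]) (use finEx disj in auto)
    moreover have "(\<Sum>x\<in>\<Lambda>. card (Ex x)) \<ge> (\<Sum>x\<in>\<Lambda>. d)" using cEx by (intro sum_mono) auto
    moreover have "card (\<Union>x\<in>\<Lambda>. Ex x) \<le> card CL"
      by (rule card_mono[OF _ sub]) (use finC in \<open>simp add: CL_def\<close>)
    ultimately show ?thesis by (simp add: mult.commute)
  qed
  have QL: "X \<inter> \<Lambda> = {}" if X: "X \<in> Q" for X
  proof (rule ccontr)
    assume "X \<inter> \<Lambda> \<noteq> {}"
    then obtain y where y: "y \<in> X" "y \<in> \<Lambda>" by blast
    have XP: "X \<in> P" using X unfolding Q_def by simp
    have "X = R `` {y}" using pa[OF XP y(1)] .
    then have "X = {y}" using y(2) unfolding \<Lambda>_def by simp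
    then have "X \<in> \<Lambda>P" using y(2) unfolding \<Lambda>P_def by blast
    then show False using X unfolding Q_def by simp
  qed
  have Qshape: "card X \<ge> 2 \<or> (\<exists>x. X = {x} \<and> \<not> light V E \<epsilon> x)" if X: "X \<in> Q" for X
  proof (rule ccontr)
    assume nn: "\<not> ?thesis"
    have XP: "X \<in> P" using X unfolding Q_def by simp
    obtain x where x: "x \<in> V" "X = R `` {x}" using XP unfolding P_def by blast
    have xX: "x \<in> X" using x Rrefl by simp
    have finX: "finite X" using finite_subset[OF pV[OF XP] finV] .
    have "card X \<noteq> 0" using xX finX by auto
    then have "card X = 1" using nn by simp
    then have "X = {x}" using xX finX by (metis card_1_singletonE singletonD)
    then have "L x" using nn unfolding L_def by blast
    then have "x \<in> \<Lambda>" unfolding \<Lambda>_def using x \<open>X = {x}\<close> by simp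
    then show False using QL[OF X] xX by blast
  qed
  have Oeq: "{g\<in>C'. g \<inter> X \<noteq> {}} = {g\<in>E. g \<inter> X \<noteq> {} \<and> \<not> g \<subseteq> X \<and> g \<inter> \<Lambda> = {}}" if X: "X \<in> Q" for X
  proof (intro set_eqI iffI)
    have XP: "X \<in> P" using X unfolding Q_def by simp
    {
      fix g assume gE: "g \<in> E" and gX: "g \<inter> X \<noteq> {}"
      then obtain a where a: "a \<in> g" "a \<in> X" by blast
      obtain a' b' where "g = {a', b'}" using sg gE unfolding simple_graph_def by blast
      then obtain b where ab: "g = {a, b}" using a(1) by auto
      have "inside R g \<longleftrightarrow> (a, b) \<in> R" by (rule ins[OF ab])
      also have "\<dots> \<longleftrightarrow> b \<in> X" using pa[OF XP a(2)] by simp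
      also have "\<dots> \<longleftrightarrow> g \<subseteq> X" using ab a(2) by simp
      finally have "inside R g \<longleftrightarrow> g \<subseteq> X" .
    }
    note key = this
    fix g
    show "g \<in> {g\<in>C'. g \<inter> X \<noteq> {}} \<Longrightarrow> g \<in> {g\<in>E. g \<inter> X \<noteq> {} \<and> \<not> g \<subseteq> X \<and> g \<inter> \<Lambda> = {}}"
      using key unfolding C'_def CL_def C_def by blast
    show "g \<in> {g\<in>E. g \<inter> X \<noteq> {} \<and> \<not> g \<subseteq> X \<and> g \<inter> \<Lambda> = {}} \<Longrightarrow> g \<in> {g\<in>C'. g \<inter> X \<noteq> {}}"
      using key unfolding C'_def CL_def C_def by blast
  qed
  have LL: "\<forall>x\<in>\<Lambda>. light V E \<epsilon> x" unfolding \<Lambda>_def L_def by blast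
  have claimS: "2 * real d \<le> real (card {g\<in>C'. g \<inter> X \<noteq> {}})" if X: "X \<in> Qs" for X
  proof -
    have XQ: "X \<in> Q" using X unfolding Qs_def by simp
    have XP: "X \<in> P" using XQ unfolding Q_def by simp
    show ?thesis unfolding Oeq[OF XQ] d_def
      by (rule small_part[OF sg a2 a3 b a1 big pV[OF XP] _ QL[OF XQ] LL Qshape[OF XQ]])
        (use X in \<open>simp add: Qs_def\<close>)
  qed
  have claimB: "\<eta> * D * real n \<le> real (card {g\<in>C'. g \<inter> X \<noteq> {}})" if X: "X \<in> Qb" and two: "card Qb \<ge> 2" for X
  proof -
    have "Qb - {X} \<noteq> {}"
    proof
      assume "Qb - {X} = {}"
      then have "Qb \<subseteq> {X}" by blast
      then have "card Qb \<le> card {X}" by (rule card_mono[rotated]) simp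
      then have "card Qb \<le> 1" by simp
      then show False using two by simp
    qed
    then obtain Y where Y: "Y \<in> Qb" "Y \<noteq> X" by blast
    have XQ: "X \<in> Q" and YQ: "Y \<in> Q" using X Y unfolding Qb_def by auto
    have XP: "X \<in> P" and YP: "Y \<in> P" using XQ YQ unfolding Q_def by auto
    have Xbig: "real (card X) \<ge> \<zeta> * real n" and Ybig: "real (card Y) \<ge> \<zeta> * real n"
      using X Y unfolding Qb_def Qs_def by auto
    have XY: "X \<inter> Y = {}"
    proof (rule ccontr)
      assume "X \<inter> Y \<noteq> {}"
      then obtain c where cX: "c \<in> X" and cY: "c \<in> Y" by blast
      have "X = R `` {c}" "Y = R `` {c}" using pa[OF XP cX] pa[OF YP cY] by simp_all
      then have "X = Y" by simp
      then show False using Y(2) by simp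
    qed
    have crs: "cross_edges E Y X = cross_edges E X Y"
      unfolding cross_edges_def by (auto simp: insert_commute)
    have cr: "\<eta> * D * real n \<le> real (card (cross_edges E X Y))"
    proof (cases "card X \<ge> card Y")
      case True then show ?thesis using c[rule_format, of X Y] pV[OF XP] pV[OF YP] XY Ybig unfolding D_def by simp
    next
      case False
      then have "card Y \<ge> card X" by simp
      moreover have "Y \<inter> X = {}" using XY by blast
      ultimately have "\<eta> * D * real n \<le> real (card (cross_edges E Y X))"
        using c[rule_format, of Y X] pV[OF XP] pV[OF YP] Xbig unfolding D_def by simp
      then show ?thesis using crs by simp
    qed
    have sub: "cross_edges E X Y \<subseteq> {g\<in>E. g \<inter> X \<noteq> {} \<and> \<not> g \<subseteq> X \<and> g \<inter> \<Lambda> = {}}"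
    proof
      fix g assume "g \<in> cross_edges E X Y"
      then obtain u v where g: "g \<in> E" "u \<in> X" "v \<in> Y" "g = {u, v}" unfolding cross_edges_def by blast
      have "v \<notin> X" using XY g(3) by blast
      moreover have "u \<notin> \<Lambda>" "v \<notin> \<Lambda>" using QL[OF XQ] QL[OF YQ] g(2,3) by blast+
      ultimately show "g \<in> {g\<in>E. g \<inter> X \<noteq> {} \<and> \<not> g \<subseteq> X \<and> g \<inter> \<Lambda> = {}}" using g by auto
    qed
    have "card (cross_edges E X Y) \<le> card {g\<in>E. g \<inter> X \<noteq> {} \<and> \<not> g \<subseteq> X \<and> g \<inter> \<Lambda> = {}}"
      by (rule card_mono[OF _ sub]) (use finE in simp)
    then show ?thesis using cr Oeq[OF XQ] by simp
  qed
  have claimDC: "(\<Sum>X\<in>Q. card {g\<in>C'. g \<inter> X \<noteq> {}}) \<le> 2 * card C'"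
  proof -
    have finC': "finite C'" unfolding C'_def using finC by simp
    have "(\<Sum>X\<in>Q. card {g\<in>C'. g \<inter> X \<noteq> {}}) = (\<Sum>g\<in>C'. card {X\<in>Q. g \<inter> X \<noteq> {}})"
      by (rule dc[OF finQ finC'])
    also have "\<dots> \<le> (\<Sum>g\<in>C'. 2)"
    proof (rule sum_mono)
      fix g assume "g \<in> C'"
      then have "g \<in> E" unfolding C'_def C_def by simp
      then obtain a b where ab: "g = {a, b}" using sg unfolding simple_graph_def by blast
      have "{X\<in>Q. g \<inter> X \<noteq> {}} \<subseteq> {R `` {a}, R `` {b}}"
      proof
        fix X assume "X \<in> {X\<in>Q. g \<inter> X \<noteq> {}}"
        then have XP: "X \<in> P" and gX: "g \<inter> X \<noteq> {}" unfolding Q_def by auto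
        then obtain e where "e \<in> g" "e \<in> X" by blast
        then show "X \<in> {R `` {a}, R `` {b}}" using pa[OF XP] ab by auto
      qed
      then have "card {X\<in>Q. g \<inter> X \<noteq> {}} \<le> card {R `` {a}, R `` {b}}" by (rule card_mono[rotated]) simp
      also have "\<dots> \<le> 2" by (simp add: card_insert_le_m1)
      finally show "card {X\<in>Q. g \<inter> X \<noteq> {}} \<le> 2" .
    qed
    also have "\<dots> = 2 * card C'" by simp
    finally show ?thesis .
  qed
  have QsQ: "Qs \<subseteq> Q" unfolding Qs_def by blast
  have QQ: "Q = Qs \<union> Qb" "Qs \<inter> Qb = {}" unfolding Qb_def using QsQ by auto
  have sumQ: "(\<Sum>X\<in>Q. real (card {g\<in>C'. g \<inter> X \<noteq> {}})) = (\<Sum>X\<in>Qs. real (card {g\<in>C'. g \<inter> X \<noteq> {}})) + (\<Sum>X\<in>Qb. real (card {g\<in>C'. g \<inter> X \<noteq> {}}))"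
    unfolding QQ(1) by (rule sum.union_disjoint) (use finQ QQ in auto)
  have sQs: "(\<Sum>X\<in>Qs. real (card {g\<in>C'. g \<inter> X \<noteq> {}})) \<ge> 2 * real d * real (card Qs)"
  proof -
    have "(\<Sum>X\<in>Qs. real (card {g\<in>C'. g \<inter> X \<noteq> {}})) \<ge> (\<Sum>X\<in>Qs. 2 * real d)" using claimS by (intro sum_mono) auto
    then show ?thesis by (simp add: mult.commute)
  qed
  have dle: "2 * real d \<le> \<eta> * D * real n"
  proof -
    have "2 * real d \<le> \<epsilon> / 2 * D" using a1 unfolding d_def D_def by simp
    also have "\<dots> \<le> \<eta> * real n * D" using etan Dpos by (intro mult_right_mono) auto
    finally show ?thesis by (simp add: algebra_simps)
  qed
  have sQb: "(\<Sum>X\<in>Qb. real (card {g\<in>C'. g \<inter> X \<noteq> {}})) \<ge> (if card Qb \<ge> 2 then 2 * real d * real (card Qb) else 0)"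
  proof (cases "card Qb \<ge> 2")
    case True
    have "(\<Sum>X\<in>Qb. 2 * real d) \<le> (\<Sum>X\<in>Qb. real (card {g\<in>C'. g \<inter> X \<noteq> {}}))"
    proof (rule sum_mono)
      fix X assume "X \<in> Qb"
      then have "\<eta> * D * real n \<le> real (card {g\<in>C'. g \<inter> X \<noteq> {}})" using claimB True by blast
      then show "2 * real d \<le> real (card {g\<in>C'. g \<inter> X \<noteq> {}})" using dle by linarith
    qed
    then show ?thesis using True by (simp add: mult.commute)
  next
    case False
    have "0 \<le> (\<Sum>X\<in>Qb. real (card {g\<in>C'. g \<inter> X \<noteq> {}}))" by (rule sum_nonneg) simp
    then show ?thesis using False by simp
  qed
  have DCr: "(\<Sum>X\<in>Q. real (card {g\<in>C'. g \<inter> X \<noteq> {}})) \<le> 2 * real (card C')"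
  proof -
    have "real (\<Sum>X\<in>Q. card {g\<in>C'. g \<inter> X \<noteq> {}}) \<le> real (2 * card C')"
      using claimDC by (simp only: of_nat_le_iff)
    then show ?thesis by simp
  qed
  have Ar: "real d * real (card \<Lambda>) \<le> real (card CL)"
  proof -
    have "real (d * card \<Lambda>) \<le> real (card CL)" using claimA by (simp only: of_nat_le_iff)
    then show ?thesis by simp
  qed
  define B where "B = (if card Qb \<ge> 2 then real d * real (card Qb) else 0)"
  have tot: "real (card C) \<ge> real d * (real (card \<Lambda>) + real (card Qs)) + B"
  proof -
    have e1: "real (card C) = real (card CL) + real (card C')" using cC by simp
    have "2 * real (card C') \<ge> 2 * real d * real (card Qs) + 2 * B"
      using DCr sumQ sQs sQb unfolding B_def by (simp split: if_splits)
    then have "real (card C') \<ge> real d * real (card Qs) + B" by simp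
    then show ?thesis using Ar e1 by (simp add: algebra_simps)
  qed
  have final: "real d * (real (card P) - 1) \<le> real (card C)"
  proof (cases "card Qb \<ge> 2")
    case True
    then have "B = real d * real (card Qb)" unfolding B_def by simp
    moreover have "real (card P) = real (card \<Lambda>) + real (card Qs) + real (card Qb)" using cP by simp
    moreover have "real d * (real (card P) - 1) \<le> real d * real (card P)" by (intro mult_left_mono) auto
    ultimately show ?thesis using tot by (simp add: algebra_simps)
  next
    case False
    then have B0: "B = 0" unfolding B_def by simp
    from False have "real (card Qb) \<le> 1" by simp
    then have "real (card P) - 1 \<le> real (card \<Lambda>) + real (card Qs)" using cP by simp
    then have "real d * (real (card P) - 1) \<le> real d * (real (card \<Lambda>) + real (card Qs))"
      by (intro mult_left_mono) auto
    then show ?thesis using tot B0 by simp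
  qed
  have "real (d * (card P - 1)) \<le> real (card C)"
  proof (cases "card P")
    case 0 then show ?thesis by simp
  next
    case (Suc m) then show ?thesis using final by simp
  qed
  then show ?thesis unfolding d_def P_def C_def by (simp only: of_nat_le_iff)
qed

theorem proposition3p3:
  fixes G :: "nat \<Rightarrow> nat set set"
  assumes graphs: "\<And>n. simple_graph {1..n} (G n)"
    and dbar_inf: "filterlim (\<lambda>n. avg_deg {1..n} (G n)) at_top sequentially"
    and hyp: "\<exists>\<epsilon> \<zeta> \<eta>. \<epsilon> > 0 \<and> \<zeta> > 0 \<and> \<eta> > 0 \<and>
      (\<forall>\<^sub>F n in sequentially.
         \<comment> \<open>(a)\<close>
         real (min_degree {1..n} (G n)) \<le> (\<epsilon> / 4) * avg_deg {1..n} (G n) \<and>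
         (\<forall>u v. light {1..n} (G n) \<epsilon> u \<and> light {1..n} (G n) \<epsilon> v \<longrightarrow> {u, v} \<notin> G n) \<and>
         (\<forall>w\<in>{1..n}. card {u. light {1..n} (G n) \<epsilon> u \<and> {u, w} \<in> G n} \<le> 1) \<and>
         \<comment> \<open>(b)\<close>
         (\<forall>S. S \<subseteq> {1..n} \<and> real (card S) < \<zeta> * real n \<longrightarrow>
              real (card (induced_edges (G n) S)) \<le> (\<epsilon> / 4) * avg_deg {1..n} (G n) * real (card S)) \<and>
         \<comment> \<open>(c)\<close>
         (\<forall>S S'. S \<subseteq> {1..n} \<and> S' \<subseteq> {1..n} \<and> S \<inter> S' = {} \<and>
              card S \<ge> card S' \<and> real (card S') \<ge> \<zeta> * real n \<longrightarrow>
              real (card (cross_edges (G n) S S')) \<ge> \<eta> * avg_deg {1..n} (G n) * real n))"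
  shows "\<forall>\<^sub>F n in sequentially. tree_packing {1..n} (G n) = min_degree {1..n} (G n)"
proof -
  obtain \<epsilon> \<zeta> \<eta> where pos: "\<epsilon> > 0" "\<zeta> > 0" "\<eta> > 0" and ev: "\<forall>\<^sub>F n in sequentially.
         real (min_degree {1..n} (G n)) \<le> (\<epsilon> / 4) * avg_deg {1..n} (G n) \<and>
         (\<forall>u v. light {1..n} (G n) \<epsilon> u \<and> light {1..n} (G n) \<epsilon> v \<longrightarrow> {u, v} \<notin> G n) \<and>
         (\<forall>w\<in>{1..n}. card {u. light {1..n} (G n) \<epsilon> u \<and> {u, w} \<in> G n} \<le> 1) \<and>
         (\<forall>S. S \<subseteq> {1..n} \<and> real (card S) < \<zeta> * real n \<longrightarrow>
              real (card (induced_edges (G n) S)) \<le> (\<epsilon> / 4) * avg_deg {1..n} (G n) * real (card S)) \<and>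
         (\<forall>S S'. S \<subseteq> {1..n} \<and> S' \<subseteq> {1..n} \<and> S \<inter> S' = {} \<and>
              card S \<ge> card S' \<and> real (card S') \<ge> \<zeta> * real n \<longrightarrow>
              real (card (cross_edges (G n) S S')) \<ge> \<eta> * avg_deg {1..n} (G n) * real n)"
    using hyp by blast
  have ev1: "\<forall>\<^sub>F n in sequentially. 12 / \<epsilon> \<le> avg_deg {1..n} (G n)"
    using dbar_inf unfolding filterlim_at_top by blast
  have ev2: "\<forall>\<^sub>F n in sequentially. nat (ceiling (\<epsilon> / (2 * \<eta>))) + 2 \<le> n"
    by (rule eventually_ge_at_top)
  show ?thesis
  proof (rule eventually_mono[OF eventually_conj[OF ev eventually_conj[OF ev1 ev2]]])
    fix n
    assume h: "(real (min_degree {1..n} (G n)) \<le> (\<epsilon> / 4) * avg_deg {1..n} (G n) \<and>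
         (\<forall>u v. light {1..n} (G n) \<epsilon> u \<and> light {1..n} (G n) \<epsilon> v \<longrightarrow> {u, v} \<notin> G n) \<and>
         (\<forall>w\<in>{1..n}. card {u. light {1..n} (G n) \<epsilon> u \<and> {u, w} \<in> G n} \<le> 1) \<and>
         (\<forall>S. S \<subseteq> {1..n} \<and> real (card S) < \<zeta> * real n \<longrightarrow>
              real (card (induced_edges (G n) S)) \<le> (\<epsilon> / 4) * avg_deg {1..n} (G n) * real (card S)) \<and>
         (\<forall>S S'. S \<subseteq> {1..n} \<and> S' \<subseteq> {1..n} \<and> S \<inter> S' = {} \<and>
              card S \<ge> card S' \<and> real (card S') \<ge> \<zeta> * real n \<longrightarrow>
              real (card (cross_edges (G n) S S')) \<ge> \<eta> * avg_deg {1..n} (G n) * real n)) \<and>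
         (12 / \<epsilon> \<le> avg_deg {1..n} (G n) \<and> nat (ceiling (\<epsilon> / (2 * \<eta>))) + 2 \<le> n)"
    have big: "\<epsilon> * avg_deg {1..n} (G n) \<ge> 12"
    proof -
      have "12 / \<epsilon> \<le> avg_deg {1..n} (G n)" using h[THEN conjunct2, THEN conjunct1] .
      then have "\<epsilon> * (12 / \<epsilon>) \<le> \<epsilon> * avg_deg {1..n} (G n)" using pos(1) by (intro mult_left_mono) auto
      then show ?thesis using pos(1) by simp
    qed
    have nge: "nat (ceiling (\<epsilon> / (2 * \<eta>))) + 2 \<le> n" using h[THEN conjunct2, THEN conjunct2] .
    have etan: "\<eta> * real n \<ge> \<epsilon> / 2"
    proof -
      have "\<epsilon> / (2 * \<eta>) \<le> real (nat (ceiling (\<epsilon> / (2 * \<eta>))))" by linarith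
      also have "\<dots> \<le> real n"
      proof -
        have "nat (ceiling (\<epsilon> / (2 * \<eta>))) \<le> n" using nge by linarith
        then show ?thesis by (rule of_nat_mono)
      qed
      finally have "\<epsilon> / (2 * \<eta>) \<le> real n" .
      then have "\<eta> * (\<epsilon> / (2 * \<eta>)) \<le> \<eta> * real n" using pos(3) by (intro mult_left_mono) auto
      then show ?thesis using pos(3) by simp
    qed
    have n2: "card {1..n} \<ge> 2" using nge by simp
    have cond: "\<forall>R. equivon {1..n} R \<longrightarrow> min_degree {1..n} (G n) * (card ((\<lambda>x. R `` {x}) ` {1..n}) - 1) \<le> card {g\<in>G n. \<not> inside R g}"
    proof (intro allI impI)
      fix R assume eqR: "equivon {1..n} R"
      show "min_degree {1..n} (G n) * (card ((\<lambda>x. R `` {x}) ` {1..n}) - 1) \<le> card {g\<in>G n. \<not> inside R g}"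
        by (rule part_cond[OF graphs h[THEN conjunct1, THEN conjunct1]
            h[THEN conjunct1, THEN conjunct2, THEN conjunct1]
            h[THEN conjunct1, THEN conjunct2, THEN conjunct2, THEN conjunct1]
            h[THEN conjunct1, THEN conjunct2, THEN conjunct2, THEN conjunct2, THEN conjunct1]
            h[THEN conjunct1, THEN conjunct2, THEN conjunct2, THEN conjunct2, THEN conjunct2]
            big etan pos(1) eqR])
    qed
    show "tree_packing {1..n} (G n) = min_degree {1..n} (G n)"
      by (rule tp_eq[OF graphs n2 cond])
  qed
qed

end
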